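(* Let $(\mathcal S,\mathcal R)$ be a ringed site and let $N^\bullet=[N^{-1}\to N^0]$ and $M^\bullet=[M^{-1}\to M^0]$ be locally free complexes of $\mathcal R$-modules. Then every butterfly $[N^\bullet,P,M^\bullet]$ in the category of $\mathcal R$-modules is locally split, and its middle object $P$ is locally free (so that it is a locally split butterfly of locally free objects).
   Context: $\mathcal S$ is a site with subcanonical topology and $\mathcal R$ a sheaf of commutative unital rings on $\mathcal S$. A butterfly from $N^\bullet$ to $M^\bullet$ in $\mathcal R$-modules is an $\mathcal R$-module $P$ with $\mathcal R$-linear maps $\kappa\colon N^{-1}\to P$, $\imath\colon M^{-1}\to P$, $\pi\colon P\to N^0$, $\jmath\colon P\to M^0$ such that $\pi\kappa=d_N$, $\jmath\imath=d_M$, $\jmath\kappa=0$ and $0\to M^{-1}\xrightarrow{\imath}P\xrightarrow{\pi}N^0\to0$ is an exact sequence of $\mathcal R$-modules. It is locally split if there is a generalized cover $V$ of the terminal object such that this extension splits in $\mathcal R$-modules after restriction to $V$. An $\mathcal R$-module $M$ is locally free of rank $m$ if there is a generalized cover $Y\to *$ with $M|_Y\cong(\mathcal R|_Y)^m$; a complex is locally free if both its terms are. *)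

theory Defs
  imports "HOL-Algebra.Module"
begin

text \<open>A (small) category with objects in Ob, morphism sets Hom Y X (from Y to X),
  composition cmp g f (first f, then g) and identities idm; together with a
  Grothendieck topology Cov: Cov X is the set of covering sieves on X, where a sieve
  on X is a set of pairs (Y, f) with f in Hom Y X closed under precomposition.\<close>

record ('o, 'a) site =
  Ob  :: "'o set"
  Hom :: "'o \<Rightarrow> 'o \<Rightarrow> 'a set"
  cmp :: "'a \<Rightarrow> 'a \<Rightarrow> 'a"
  idm :: "'o \<Rightarrow> 'a"
  Cov :: "'o \<Rightarrow> ('o \<times> 'a) set set"

definition is_category :: "('o, 'a) site \<Rightarrow> bool" where
  "is_category C \<longleftrightarrow>
     (\<forall>X\<in>Ob C. idm C X \<in> Hom C X X) \<and>
     (\<forall>X\<in>Ob C. \<forall>Y\<in>Ob C. \<forall>Z\<in>Ob C. \<forall>f\<in>Hom C X Y. \<forall>g\<in>Hom C Y Z.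
         cmp C g f \<in> Hom C X Z) \<and>
     (\<forall>X\<in>Ob C. \<forall>Y\<in>Ob C. \<forall>f\<in>Hom C X Y.
         cmp C f (idm C X) = f \<and> cmp C (idm C Y) f = f) \<and>
     (\<forall>W\<in>Ob C. \<forall>X\<in>Ob C. \<forall>Y\<in>Ob C. \<forall>Z\<in>Ob C.
        \<forall>f\<in>Hom C W X. \<forall>g\<in>Hom C X Y. \<forall>h\<in>Hom C Y Z.
         cmp C h (cmp C g f) = cmp C (cmp C h g) f)"

definition max_sieve :: "('o, 'a) site \<Rightarrow> 'o \<Rightarrow> ('o \<times> 'a) set" where
  "max_sieve C X = {(Y, f). Y \<in> Ob C \<and> f \<in> Hom C Y X}"

definition is_sieve :: "('o, 'a) site \<Rightarrow> 'o \<Rightarrow> ('o \<times> 'a) set \<Rightarrow> bool" where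
  "is_sieve C X S \<longleftrightarrow> S \<subseteq> max_sieve C X \<and>
     (\<forall>(Y, f)\<in>S. \<forall>Z\<in>Ob C. \<forall>g\<in>Hom C Z Y. (Z, cmp C f g) \<in> S)"

definition pb_sieve :: "('o, 'a) site \<Rightarrow> ('o \<times> 'a) set \<Rightarrow> 'o \<Rightarrow> 'a \<Rightarrow> ('o \<times> 'a) set" where
  "pb_sieve C S Z h = {(W, g). W \<in> Ob C \<and> g \<in> Hom C W Z \<and> (W, cmp C h g) \<in> S}"

definition is_site :: "('o, 'a) site \<Rightarrow> bool" where
  "is_site C \<longleftrightarrow> is_category C \<and>
     (\<forall>X\<in>Ob C. \<forall>S\<in>Cov C X. is_sieve C X S) \<and>
     (\<forall>X\<in>Ob C. max_sieve C X \<in> Cov C X) \<and>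
     (\<forall>X\<in>Ob C. \<forall>Z\<in>Ob C. \<forall>S\<in>Cov C X. \<forall>h\<in>Hom C Z X. pb_sieve C S Z h \<in> Cov C Z) \<and>
     (\<forall>X\<in>Ob C. \<forall>S\<in>Cov C X. \<forall>R. is_sieve C X R \<longrightarrow>
         (\<forall>(Y, f)\<in>S. pb_sieve C R Y f \<in> Cov C Y) \<longrightarrow> R \<in> Cov C X)"

definition locally :: "('o, 'a) site \<Rightarrow> 'o \<Rightarrow> ('o \<Rightarrow> 'a \<Rightarrow> bool) \<Rightarrow> bool" where
  "locally C X Q \<longleftrightarrow> {(Y, f). Y \<in> Ob C \<and> f \<in> Hom C Y X \<and> Q Y f} \<in> Cov C X"

definition presheaf :: "('o, 'a) site \<Rightarrow> ('o \<Rightarrow> 'x set) \<Rightarrow> ('o \<Rightarrow> 'o \<Rightarrow> 'a \<Rightarrow> 'x \<Rightarrow> 'x) \<Rightarrow> bool" where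
  "presheaf C F rs \<longleftrightarrow>
     (\<forall>X\<in>Ob C. \<forall>Y\<in>Ob C. \<forall>f\<in>Hom C Y X. \<forall>s\<in>F X. rs X Y f s \<in> F Y) \<and>
     (\<forall>X\<in>Ob C. \<forall>s\<in>F X. rs X X (idm C X) s = s) \<and>
     (\<forall>X\<in>Ob C. \<forall>Y\<in>Ob C. \<forall>Z\<in>Ob C. \<forall>f\<in>Hom C Y X. \<forall>g\<in>Hom C Z Y. \<forall>s\<in>F X.
         rs X Z (cmp C f g) s = rs Y Z g (rs X Y f s))"

definition matching_family ::
  "('o, 'a) site \<Rightarrow> ('o \<Rightarrow> 'x set) \<Rightarrow> ('o \<Rightarrow> 'o \<Rightarrow> 'a \<Rightarrow> 'x \<Rightarrow> 'x)
     \<Rightarrow> ('o \<times> 'a) set \<Rightarrow> ('o \<Rightarrow> 'a \<Rightarrow> 'x) \<Rightarrow> bool" where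
  "matching_family C F rs S fam \<longleftrightarrow>
     (\<forall>(Y, f)\<in>S. fam Y f \<in> F Y \<and>
        (\<forall>Z\<in>Ob C. \<forall>g\<in>Hom C Z Y. rs Y Z g (fam Y f) = fam Z (cmp C f g)))"

definition sheaf :: "('o, 'a) site \<Rightarrow> ('o \<Rightarrow> 'x set) \<Rightarrow> ('o \<Rightarrow> 'o \<Rightarrow> 'a \<Rightarrow> 'x \<Rightarrow> 'x) \<Rightarrow> bool" where
  "sheaf C F rs \<longleftrightarrow> presheaf C F rs \<and>
     (\<forall>X\<in>Ob C. \<forall>S\<in>Cov C X. \<forall>fam. matching_family C F rs S fam \<longrightarrow>
        (\<exists>!t. t \<in> F X \<and> (\<forall>(Y, f)\<in>S. rs X Y f t = fam Y f)))"

definition subcanonical :: "('o, 'a) site \<Rightarrow> bool" where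
  "subcanonical C \<longleftrightarrow> (\<forall>X\<in>Ob C. sheaf C (\<lambda>Y. Hom C Y X) (\<lambda>Y Z g f. cmp C f g))"

record ('o, 'a, 'r) ringsheaf =
  rng :: "'o \<Rightarrow> 'r ring"
  rrs :: "'o \<Rightarrow> 'o \<Rightarrow> 'a \<Rightarrow> 'r \<Rightarrow> 'r"

record ('o, 'a, 'r, 'v) modsheaf =
  mdl :: "'o \<Rightarrow> ('r, 'v) module"
  mrs :: "'o \<Rightarrow> 'o \<Rightarrow> 'a \<Rightarrow> 'v \<Rightarrow> 'v"

definition ring_sheaf :: "('o, 'a) site \<Rightarrow> ('o, 'a, 'r) ringsheaf \<Rightarrow> bool" where
  "ring_sheaf C R \<longleftrightarrow>
     (\<forall>X\<in>Ob C. cring (rng R X)) \<and>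
     (\<forall>X\<in>Ob C. \<forall>Y\<in>Ob C. \<forall>f\<in>Hom C Y X. rrs R X Y f \<in> ring_hom (rng R X) (rng R Y)) \<and>
     sheaf C (\<lambda>X. carrier (rng R X)) (rrs R)"

definition module_sheaf ::
  "('o, 'a) site \<Rightarrow> ('o, 'a, 'r) ringsheaf \<Rightarrow> ('o, 'a, 'r, 'v) modsheaf \<Rightarrow> bool" where
  "module_sheaf C R M \<longleftrightarrow>
     (\<forall>X\<in>Ob C. module (rng R X) (mdl M X)) \<and>
     (\<forall>X\<in>Ob C. \<forall>Y\<in>Ob C. \<forall>f\<in>Hom C Y X.
        \<forall>x\<in>carrier (mdl M X). \<forall>y\<in>carrier (mdl M X).
          mrs M X Y f (x \<oplus>\<^bsub>mdl M X\<^esub> y) = mrs M X Y f x \<oplus>\<^bsub>mdl M Y\<^esub> mrs M X Y f y) \<and>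
     (\<forall>X\<in>Ob C. \<forall>Y\<in>Ob C. \<forall>f\<in>Hom C Y X.
        \<forall>a\<in>carrier (rng R X). \<forall>x\<in>carrier (mdl M X).
          mrs M X Y f (a \<odot>\<^bsub>mdl M X\<^esub> x) = rrs R X Y f a \<odot>\<^bsub>mdl M Y\<^esub> mrs M X Y f x) \<and>
     sheaf C (\<lambda>X. carrier (mdl M X)) (mrs M)"

definition linear_map :: "'r ring \<Rightarrow> ('r, 'v) module \<Rightarrow> ('r, 'w) module \<Rightarrow> ('v \<Rightarrow> 'w) \<Rightarrow> bool" where
  "linear_map A M N h \<longleftrightarrow>
     (\<forall>x\<in>carrier M. h x \<in> carrier N) \<and>
     (\<forall>x\<in>carrier M. \<forall>y\<in>carrier M. h (x \<oplus>\<^bsub>M\<^esub> y) = h x \<oplus>\<^bsub>N\<^esub> h y) \<and>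
     (\<forall>a\<in>carrier A. \<forall>x\<in>carrier M. h (a \<odot>\<^bsub>M\<^esub> x) = a \<odot>\<^bsub>N\<^esub> h x)"

definition module_morphism ::
  "('o, 'a) site \<Rightarrow> ('o, 'a, 'r) ringsheaf \<Rightarrow> ('o, 'a, 'r, 'v) modsheaf \<Rightarrow> ('o, 'a, 'r, 'w) modsheaf
     \<Rightarrow> ('o \<Rightarrow> 'v \<Rightarrow> 'w) \<Rightarrow> bool" where
  "module_morphism C R M N h \<longleftrightarrow>
     (\<forall>X\<in>Ob C. linear_map (rng R X) (mdl M X) (mdl N X) (h X)) \<and>
     (\<forall>X\<in>Ob C. \<forall>Y\<in>Ob C. \<forall>f\<in>Hom C Y X. \<forall>s\<in>carrier (mdl M X).
        h Y (mrs M X Y f s) = mrs N X Y f (h X s))"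

text \<open>Short exact sequence 0 \<rightarrow> A \<rightarrow> B \<rightarrow> D \<rightarrow> 0 in the category of sheaves of R-modules:
  i is a monomorphism (sectionwise injective), p \<circ> i = 0, the kernel of p is locally in
  the image of i, and p is an epimorphism of sheaves (locally surjective).\<close>
definition short_exact ::
  "('o, 'a) site \<Rightarrow> ('o, 'a, 'r) ringsheaf \<Rightarrow> ('o, 'a, 'r, 'u) modsheaf \<Rightarrow> ('o, 'a, 'r, 'v) modsheaf
     \<Rightarrow> ('o, 'a, 'r, 'w) modsheaf \<Rightarrow> ('o \<Rightarrow> 'u \<Rightarrow> 'v) \<Rightarrow> ('o \<Rightarrow> 'v \<Rightarrow> 'w) \<Rightarrow> bool" where
  "short_exact C R A B D i p \<longleftrightarrow>
     module_morphism C R A B i \<and> module_morphism C R B D p \<and>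
     (\<forall>X\<in>Ob C. inj_on (i X) (carrier (mdl A X))) \<and>
     (\<forall>X\<in>Ob C. \<forall>s\<in>carrier (mdl A X). p X (i X s) = \<zero>\<^bsub>mdl D X\<^esub>) \<and>
     (\<forall>X\<in>Ob C. \<forall>s\<in>carrier (mdl B X). p X s = \<zero>\<^bsub>mdl D X\<^esub> \<longrightarrow>
        locally C X (\<lambda>Y f. mrs B X Y f s \<in> i Y ` carrier (mdl A Y))) \<and>
     (\<forall>X\<in>Ob C. \<forall>s\<in>carrier (mdl D X).
        locally C X (\<lambda>Y f. mrs D X Y f s \<in> p Y ` carrier (mdl B Y)))"

definition butterfly ::
  "('o, 'a) site \<Rightarrow> ('o, 'a, 'r) ringsheaf
   \<Rightarrow> ('o, 'a, 'r, 'n1) modsheaf \<Rightarrow> ('o, 'a, 'r, 'n0) modsheaf \<Rightarrow> ('o \<Rightarrow> 'n1 \<Rightarrow> 'n0)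
   \<Rightarrow> ('o, 'a, 'r, 'm1) modsheaf \<Rightarrow> ('o, 'a, 'r, 'm0) modsheaf \<Rightarrow> ('o \<Rightarrow> 'm1 \<Rightarrow> 'm0)
   \<Rightarrow> ('o, 'a, 'r, 'p) modsheaf
   \<Rightarrow> ('o \<Rightarrow> 'n1 \<Rightarrow> 'p) \<Rightarrow> ('o \<Rightarrow> 'm1 \<Rightarrow> 'p) \<Rightarrow> ('o \<Rightarrow> 'p \<Rightarrow> 'n0) \<Rightarrow> ('o \<Rightarrow> 'p \<Rightarrow> 'm0) \<Rightarrow> bool" where
  "butterfly C R Nm1 N0 dN Mm1 M0 dM P kap iota pi jay \<longleftrightarrow>
     module_sheaf C R P \<and>
     module_morphism C R Nm1 P kap \<and> module_morphism C R Mm1 P iota \<and>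
     module_morphism C R P N0 pi \<and> module_morphism C R P M0 jay \<and>
     (\<forall>X\<in>Ob C. \<forall>s\<in>carrier (mdl Nm1 X). pi X (kap X s) = dN X s) \<and>
     (\<forall>X\<in>Ob C. \<forall>s\<in>carrier (mdl Mm1 X). jay X (iota X s) = dM X s) \<and>
     (\<forall>X\<in>Ob C. \<forall>s\<in>carrier (mdl Nm1 X). jay X (kap X s) = \<zero>\<^bsub>mdl M0 X\<^esub>) \<and>
     short_exact C R Mm1 P N0 iota pi"

text \<open>A generalized cover of the terminal object, presented by a set \<U> of objects
  (the coproduct of the representables y(U), U \<in> \<U>, maps epimorphically onto *):
  every object is covered by objects admitting a map to some U \<in> \<U>.\<close>
definition gen_cover :: "('o, 'a) site \<Rightarrow> 'o set \<Rightarrow> bool" where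
  "gen_cover C \<U> \<longleftrightarrow> \<U> \<subseteq> Ob C \<and>
     (\<forall>X\<in>Ob C. locally C X (\<lambda>Y f. \<exists>U\<in>\<U>. Hom C Y U \<noteq> {}))"

text \<open>M restricted to C/U is isomorphic to (R restricted to C/U)^m. Since (U, id) is terminal
  in C/U, such an isomorphism is the same as sections e_0,...,e_(m-1) of M over U whose
  restrictions along every u : X \<rightarrow> U form a basis of M(X) over R(X).\<close>
definition free_on :: "('o, 'a) site \<Rightarrow> ('o, 'a, 'r) ringsheaf \<Rightarrow> ('o, 'a, 'r, 'v) modsheaf
     \<Rightarrow> nat \<Rightarrow> 'o \<Rightarrow> bool" where
  "free_on C R M m U \<longleftrightarrow>
     (\<exists>e. (\<forall>i<m. e i \<in> carrier (mdl M U)) \<and>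
        (\<forall>X\<in>Ob C. \<forall>u\<in>Hom C X U. \<forall>s\<in>carrier (mdl M X).
           \<exists>!c. c \<in> {..<m} \<rightarrow>\<^sub>E carrier (rng R X) \<and>
              s = (\<Oplus>\<^bsub>mdl M X\<^esub>i\<in>{..<m}. c i \<odot>\<^bsub>mdl M X\<^esub> mrs M U X u (e i))))"

definition locally_free_rank :: "('o, 'a) site \<Rightarrow> ('o, 'a, 'r) ringsheaf
     \<Rightarrow> ('o, 'a, 'r, 'v) modsheaf \<Rightarrow> nat \<Rightarrow> bool" where
  "locally_free_rank C R M m \<longleftrightarrow> (\<exists>\<U>. gen_cover C \<U> \<and> (\<forall>U\<in>\<U>. free_on C R M m U))"

definition locally_free :: "('o, 'a) site \<Rightarrow> ('o, 'a, 'r) ringsheaf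
     \<Rightarrow> ('o, 'a, 'r, 'v) modsheaf \<Rightarrow> bool" where
  "locally_free C R M \<longleftrightarrow> (\<exists>m. locally_free_rank C R M m)"

text \<open>The extension 0 \<rightarrow> Mm1 \<rightarrow> P \<rightarrow> N0 \<rightarrow> 0 splits in R|_U-modules: there is a morphism
  sig : N0|_U \<rightarrow> P|_U of sheaves of R|_U-modules on C/U with pi \<circ> sig = id.
  Objects of C/U are pairs (X, u) with u : X \<rightarrow> U.\<close>
definition splits_on :: "('o, 'a) site \<Rightarrow> ('o, 'a, 'r) ringsheaf \<Rightarrow> ('o, 'a, 'r, 'p) modsheaf
     \<Rightarrow> ('o, 'a, 'r, 'n0) modsheaf \<Rightarrow> ('o \<Rightarrow> 'p \<Rightarrow> 'n0) \<Rightarrow> 'o \<Rightarrow> bool" where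
  "splits_on C R P N0 pi U \<longleftrightarrow>
     (\<exists>sig. (\<forall>X\<in>Ob C. \<forall>u\<in>Hom C X U.
               linear_map (rng R X) (mdl N0 X) (mdl P X) (sig X u) \<and>
               (\<forall>s\<in>carrier (mdl N0 X). pi X (sig X u s) = s)) \<and>
            (\<forall>X\<in>Ob C. \<forall>Y\<in>Ob C. \<forall>u\<in>Hom C X U. \<forall>g\<in>Hom C Y X. \<forall>s\<in>carrier (mdl N0 X).
               sig Y (cmp C u g) (mrs N0 X Y g s) = mrs P X Y g (sig X u s)))"

definition locally_split_butterfly :: "('o, 'a) site \<Rightarrow> ('o, 'a, 'r) ringsheaf
     \<Rightarrow> ('o, 'a, 'r, 'p) modsheaf \<Rightarrow> ('o, 'a, 'r, 'n0) modsheaf \<Rightarrow> ('o \<Rightarrow> 'p \<Rightarrow> 'n0) \<Rightarrow> bool" where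
  "locally_split_butterfly C R P N0 pi \<longleftrightarrow>
     (\<exists>\<U>. gen_cover C \<U> \<and> (\<forall>U\<in>\<U>. splits_on C R P N0 pi U))"

end

theory Submission
  imports Defs
begin


lemma site_D: assumes "is_site C" shows "is_category C \<and>
     (\<forall>X\<in>Ob C. \<forall>S\<in>Cov C X. is_sieve C X S) \<and>
     (\<forall>X\<in>Ob C. max_sieve C X \<in> Cov C X) \<and>
     (\<forall>X\<in>Ob C. \<forall>Z\<in>Ob C. \<forall>S\<in>Cov C X. \<forall>h\<in>Hom C Z X. pb_sieve C S Z h \<in> Cov C Z) \<and>
     (\<forall>X\<in>Ob C. \<forall>S\<in>Cov C X. \<forall>R. is_sieve C X R \<longrightarrow>
         (\<forall>(Y, f)\<in>S. pb_sieve C R Y f \<in> Cov C Y) \<longrightarrow> R \<in> Cov C X)"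
  using assms unfolding is_site_def .
lemma cov_sieve: "is_site C \<Longrightarrow> X \<in> Ob C \<Longrightarrow> S \<in> Cov C X \<Longrightarrow> is_sieve C X S"
  by (drule site_D, elim conjE, drule bspec, assumption, drule bspec, assumption, assumption)
lemma cat_D: assumes "is_category C" shows "  (\<forall>X\<in>Ob C. idm C X \<in> Hom C X X) \<and>
     (\<forall>X\<in>Ob C. \<forall>Y\<in>Ob C. \<forall>Z\<in>Ob C. \<forall>f\<in>Hom C X Y. \<forall>g\<in>Hom C Y Z.
         cmp C g f \<in> Hom C X Z) \<and>
     (\<forall>X\<in>Ob C. \<forall>Y\<in>Ob C. \<forall>f\<in>Hom C X Y.
         cmp C f (idm C X) = f \<and> cmp C (idm C Y) f = f) \<and>
     (\<forall>W\<in>Ob C. \<forall>X\<in>Ob C. \<forall>Y\<in>Ob C. \<forall>Z\<in>Ob C.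
        \<forall>f\<in>Hom C W X. \<forall>g\<in>Hom C X Y. \<forall>h\<in>Hom C Y Z.
         cmp C h (cmp C g f) = cmp C (cmp C h g) f)"
  using assms unfolding is_category_def .
lemma cov_max: "is_site C \<Longrightarrow> X \<in> Ob C \<Longrightarrow> max_sieve C X \<in> Cov C X"
  using site_D[of C] by simp
lemma cov_pb: assumes "is_site C" "X \<in> Ob C" "Z \<in> Ob C" "S \<in> Cov C X" "h \<in> Hom C Z X" shows "pb_sieve C S Z h \<in> Cov C Z"
proof -
  have "\<forall>X\<in>Ob C. \<forall>Z\<in>Ob C. \<forall>S\<in>Cov C X. \<forall>h\<in>Hom C Z X. pb_sieve C S Z h \<in> Cov C Z" using site_D[OF assms(1)] by (elim conjE)
  then show ?thesis using assms(2-) by (elim ballE) auto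
qed
lemma cov_trans: assumes "is_site C" "X \<in> Ob C" "S \<in> Cov C X" "is_sieve C X R"
   "\<And>Y f. (Y, f) \<in> S \<Longrightarrow> pb_sieve C R Y f \<in> Cov C Y" shows "R \<in> Cov C X"
proof -
  have "\<forall>X\<in>Ob C. \<forall>S\<in>Cov C X. \<forall>R. is_sieve C X R \<longrightarrow>
         (\<forall>(Y, f)\<in>S. pb_sieve C R Y f \<in> Cov C Y) \<longrightarrow> R \<in> Cov C X" using site_D[OF assms(1)] by (elim conjE)
  then have "is_sieve C X R \<longrightarrow> (\<forall>(Y, f)\<in>S. pb_sieve C R Y f \<in> Cov C Y) \<longrightarrow> R \<in> Cov C X"
    using assms(2,3) by (elim ballE allE) auto
  moreover have "\<forall>(Y, f)\<in>S. pb_sieve C R Y f \<in> Cov C Y" using assms(5) by auto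
  ultimately show ?thesis using assms(4) by blast
qed
lemma cat_comp: assumes "is_site C" "X \<in> Ob C" "Y \<in> Ob C" "Z \<in> Ob C" "f \<in> Hom C X Y" "g \<in> Hom C Y Z" shows "cmp C g f \<in> Hom C X Z"
proof -
  have "\<forall>X\<in>Ob C. \<forall>Y\<in>Ob C. \<forall>Z\<in>Ob C. \<forall>f\<in>Hom C X Y. \<forall>g\<in>Hom C Y Z.
         cmp C g f \<in> Hom C X Z" using cat_D[OF site_D[OF assms(1), THEN conjunct1]] by (elim conjE)
  then show ?thesis using assms(2-) by (elim ballE) auto
qed
lemma cat_id: assumes "is_site C" "X \<in> Ob C" shows "idm C X \<in> Hom C X X"
proof -
  have "\<forall>X\<in>Ob C. idm C X \<in> Hom C X X" using cat_D[OF site_D[OF assms(1), THEN conjunct1]] by (elim conjE)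
  then show ?thesis using assms(2-) by (elim ballE) auto
qed
lemma cat_idr: assumes "is_site C" "X \<in> Ob C" "Y \<in> Ob C" "f \<in> Hom C X Y" shows "cmp C f (idm C X) = f"
proof -
  have "\<forall>X\<in>Ob C. \<forall>Y\<in>Ob C. \<forall>f\<in>Hom C X Y.
         cmp C f (idm C X) = f \<and> cmp C (idm C Y) f = f" using cat_D[OF site_D[OF assms(1), THEN conjunct1]] by (elim conjE)
  then show ?thesis using assms(2-) by (elim ballE) auto
qed
lemma cat_assoc: assumes "is_site C" "W \<in> Ob C" "X \<in> Ob C" "Y \<in> Ob C" "Z \<in> Ob C"
  "f \<in> Hom C W X" "g \<in> Hom C X Y" "h \<in> Hom C Y Z" shows "cmp C h (cmp C g f) = cmp C (cmp C h g) f"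
proof -
  have "\<forall>W\<in>Ob C. \<forall>X\<in>Ob C. \<forall>Y\<in>Ob C. \<forall>Z\<in>Ob C.
        \<forall>f\<in>Hom C W X. \<forall>g\<in>Hom C X Y. \<forall>h\<in>Hom C Y Z.
         cmp C h (cmp C g f) = cmp C (cmp C h g) f" using cat_D[OF site_D[OF assms(1), THEN conjunct1]] by (elim conjE)
  then show ?thesis using assms(2-) by (elim ballE) auto
qed
lemma sieve_sub: assumes "is_sieve C X S" "(Y, f) \<in> S" shows "Y \<in> Ob C" "f \<in> Hom C Y X"
proof -
  have "S \<subseteq> max_sieve C X" using assms(1) unfolding is_sieve_def by (elim conjE)
  then have "(Y, f) \<in> max_sieve C X" using assms(2) by (rule subsetD)
  then show "Y \<in> Ob C" "f \<in> Hom C Y X" unfolding max_sieve_def by auto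
qed
lemma sieve_closed: assumes "is_sieve C X S" "(Y, f) \<in> S" "Z \<in> Ob C" "g \<in> Hom C Z Y" shows "(Z, cmp C f g) \<in> S"
proof -
  have "\<forall>(Y, f)\<in>S. \<forall>Z\<in>Ob C. \<forall>g\<in>Hom C Z Y. (Z, cmp C f g) \<in> S" using assms(1) unfolding is_sieve_def by (elim conjE)
  then have "\<forall>Z\<in>Ob C. \<forall>g\<in>Hom C Z Y. (Z, cmp C f g) \<in> S" using assms(2) by (elim ballE) auto
  then show ?thesis using assms(3,4) by (elim ballE) auto
qed
lemma sieveI: assumes "\<And>Y f. (Y, f) \<in> S \<Longrightarrow> Y \<in> Ob C \<and> f \<in> Hom C Y X"
  "\<And>Y f Z g. (Y, f) \<in> S \<Longrightarrow> Z \<in> Ob C \<Longrightarrow> g \<in> Hom C Z Y \<Longrightarrow> (Z, cmp C f g) \<in> S"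
  shows "is_sieve C X S"
  unfolding is_sieve_def max_sieve_def using assms by auto

lemma cov_mem: "is_site C \<Longrightarrow> X \<in> Ob C \<Longrightarrow> S \<in> Cov C X \<Longrightarrow> (Y, f) \<in> S \<Longrightarrow> Y \<in> Ob C \<and> f \<in> Hom C Y X"
  using cov_sieve sieve_sub by metis

lemma cov_up:
  assumes site: "is_site C" and X: "X \<in> Ob C" and S: "S \<in> Cov C X" and R: "is_sieve C X R" and sub: "S \<subseteq> R"
  shows "R \<in> Cov C X"
proof (rule cov_trans[OF site X S R])
  fix Y f assume YS: "(Y, f) \<in> S"
  then have Y: "Y \<in> Ob C" and f: "f \<in> Hom C Y X" using cov_mem[OF site X S] by auto
  have YR: "(Y, f) \<in> R" using YS sub by blast
  have "pb_sieve C R Y f = max_sieve C Y"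
  proof
    show "pb_sieve C R Y f \<subseteq> max_sieve C Y" unfolding pb_sieve_def max_sieve_def by auto
    show "max_sieve C Y \<subseteq> pb_sieve C R Y f"
      unfolding pb_sieve_def max_sieve_def using sieve_closed[OF R YR] by auto
  qed
  then show "pb_sieve C R Y f \<in> Cov C Y" using cov_max[OF site Y] by simp
qed

lemma cov_int:
  assumes site: "is_site C" and X: "X \<in> Ob C" and S1: "S1 \<in> Cov C X" and S2: "S2 \<in> Cov C X"
  shows "S1 \<inter> S2 \<in> Cov C X"
proof (rule cov_trans[OF site X S1])
  have a: "is_sieve C X S1" "is_sieve C X S2" using cov_sieve[OF site X] S1 S2 by auto
  show "is_sieve C X (S1 \<inter> S2)"
    by (rule sieveI) (use sieve_sub[OF a(1)] sieve_closed[OF a(1)] sieve_closed[OF a(2)] in auto)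
  fix Y f assume YS: "(Y, f) \<in> S1"
  then have Y: "Y \<in> Ob C" and f: "f \<in> Hom C Y X" using cov_mem[OF site X S1] by auto
  have "pb_sieve C (S1 \<inter> S2) Y f = pb_sieve C S2 Y f"
    unfolding pb_sieve_def using sieve_closed[OF a(1) YS] by auto
  then show "pb_sieve C (S1 \<inter> S2) Y f \<in> Cov C Y" using cov_pb[OF site X Y S2 f] by simp
qed

lemma locally_conj:
  assumes site: "is_site C" and X: "X \<in> Ob C" and "locally C X Q1" and "locally C X Q2"
  shows "locally C X (\<lambda>Y f. Q1 Y f \<and> Q2 Y f)"
proof -
  have "{(Y, f). Y \<in> Ob C \<and> f \<in> Hom C Y X \<and> Q1 Y f \<and> Q2 Y f} =
     {(Y, f). Y \<in> Ob C \<and> f \<in> Hom C Y X \<and> Q1 Y f} \<inter> {(Y, f). Y \<in> Ob C \<and> f \<in> Hom C Y X \<and> Q2 Y f}"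
    by blast
  then show ?thesis using assms cov_int[OF site X] unfolding locally_def by simp
qed

lemma locally_all:
  fixes m :: nat
  assumes site: "is_site C" and X: "X \<in> Ob C" and "\<And>i. i < m \<Longrightarrow> locally C X (Q i)"
  shows "locally C X (\<lambda>Y f. \<forall>i<m. Q i Y f)"
  using assms(3)
proof (induction m)
  case 0
  have "{(Y, f). Y \<in> Ob C \<and> f \<in> Hom C Y X \<and> (\<forall>i<0. Q i Y f)} = max_sieve C X"
    unfolding max_sieve_def by auto
  then show ?case using cov_max[OF site X] unfolding locally_def by simp
next
  case (Suc m)
  have "locally C X (\<lambda>Y f. (\<forall>i<m. Q i Y f) \<and> Q m Y f)"
    using Suc by (intro locally_conj[OF site X]) auto
  moreover have "(\<lambda>Y f. (\<forall>i<m. Q i Y f) \<and> Q m Y f) = (\<lambda>Y f. \<forall>i<Suc m. Q i Y f)"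
    by (auto simp: less_Suc_eq)
  ultimately show ?case by simp
qed

lemma gen_cover_refine:
  assumes site: "is_site C" and GU: "gen_cover C \<U>" and loc: "\<And>U. U \<in> \<U> \<Longrightarrow> locally C U (Q U)"
    and into: "\<And>U Y f. U \<in> \<U> \<Longrightarrow> Y \<in> Ob C \<Longrightarrow> f \<in> Hom C Y U \<Longrightarrow> Q U Y f \<Longrightarrow> Y \<in> \<V>"
    and VOb: "\<V> \<subseteq> Ob C"
  shows "gen_cover C \<V>"
  unfolding gen_cover_def
proof (intro conjI ballI VOb)
  fix X assume X: "X \<in> Ob C"
  let ?S0 = "{(Y, f). Y \<in> Ob C \<and> f \<in> Hom C Y X \<and> (\<exists>U\<in>\<U>. Hom C Y U \<noteq> {})}"
  let ?T = "{(Y, f). Y \<in> Ob C \<and> f \<in> Hom C Y X \<and> (\<exists>V\<in>\<V>. Hom C Y V \<noteq> {})}"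
  have UOb: "\<U> \<subseteq> Ob C" and GU': "\<forall>X\<in>Ob C. locally C X (\<lambda>Y f. \<exists>U\<in>\<U>. Hom C Y U \<noteq> {})"
    using GU unfolding gen_cover_def by auto
  have S0: "?S0 \<in> Cov C X" using GU' X unfolding locally_def by auto
  have Tsieve: "is_sieve C X ?T"
  proof (rule sieveI)
    fix Y f assume "(Y, f) \<in> ?T" then show "Y \<in> Ob C \<and> f \<in> Hom C Y X" by auto
  next
    fix Y f Z g assume a: "(Y, f) \<in> ?T" and Z: "Z \<in> Ob C" and g: "g \<in> Hom C Z Y"
    from a obtain V h where Y: "Y \<in> Ob C" and f: "f \<in> Hom C Y X" and V: "V \<in> \<V>" and h: "h \<in> Hom C Y V" by blast
    have VO: "V \<in> Ob C" using V VOb by blast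
    have "cmp C f g \<in> Hom C Z X" by (rule cat_comp[OF site Z Y X g f])
    moreover have "cmp C h g \<in> Hom C Z V" by (rule cat_comp[OF site Z Y VO g h])
    ultimately show "(Z, cmp C f g) \<in> ?T" using Z V by blast
  qed
  show "locally C X (\<lambda>Y f. \<exists>V\<in>\<V>. Hom C Y V \<noteq> {})"
    unfolding locally_def
  proof (rule cov_trans[OF site X S0 Tsieve])
    fix Y f assume YS: "(Y, f) \<in> ?S0"
    then obtain U h where Y: "Y \<in> Ob C" and f: "f \<in> Hom C Y X" and U: "U \<in> \<U>" and h: "h \<in> Hom C Y U" by blast
    have UO: "U \<in> Ob C" using U UOb by blast
    let ?QS = "{(Y, f). Y \<in> Ob C \<and> f \<in> Hom C Y U \<and> Q U Y f}"
    have QS: "?QS \<in> Cov C U" using loc[OF U] unfolding locally_def .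
    have pbQ: "pb_sieve C ?QS Y h \<in> Cov C Y" by (rule cov_pb[OF site UO Y QS h])
    have pbT: "is_sieve C Y (pb_sieve C ?T Y f)"
    proof (rule sieveI)
      fix W g assume "(W, g) \<in> pb_sieve C ?T Y f" then show "W \<in> Ob C \<and> g \<in> Hom C W Y" unfolding pb_sieve_def by auto
    next
      fix W g Z k assume a: "(W, g) \<in> pb_sieve C ?T Y f" and Z: "Z \<in> Ob C" and k: "k \<in> Hom C Z W"
      from a have W: "W \<in> Ob C" and g: "g \<in> Hom C W Y" and fgT: "(W, cmp C f g) \<in> ?T" unfolding pb_sieve_def by auto
      have gk: "cmp C g k \<in> Hom C Z Y" by (rule cat_comp[OF site Z W Y k g])
      have "(Z, cmp C (cmp C f g) k) \<in> ?T" by (rule sieve_closed[OF Tsieve fgT Z k])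
      moreover have "cmp C (cmp C f g) k = cmp C f (cmp C g k)" using cat_assoc[OF site Z W Y X k g f] by simp
      ultimately show "(Z, cmp C g k) \<in> pb_sieve C ?T Y f" unfolding pb_sieve_def using Z gk by auto
    qed
    have "pb_sieve C ?QS Y h \<subseteq> pb_sieve C ?T Y f"
    proof
      fix p assume "p \<in> pb_sieve C ?QS Y h"
      then obtain W g where p: "p = (W, g)" and W: "W \<in> Ob C" and g: "g \<in> Hom C W Y" and Q: "Q U W (cmp C h g)"
        and hg: "cmp C h g \<in> Hom C W U" unfolding pb_sieve_def by blast
      have WV: "W \<in> \<V>" using into[OF U W hg Q] .
      have "cmp C f g \<in> Hom C W X" using cat_comp[OF site W Y X g f] .
      moreover have "idm C W \<in> Hom C W W" using cat_id[OF site W] .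
      ultimately show "p \<in> pb_sieve C ?T Y f" unfolding pb_sieve_def using p W g WV by blast
    qed
    then show "pb_sieve C ?T Y f \<in> Cov C Y" using cov_up[OF site Y pbQ pbT] by blast
  qed
qed




lemma ms_module: assumes "module_sheaf C R M" "X \<in> Ob C" shows "module (rng R X) (mdl M X)"
proof -
  have "\<forall>X\<in>Ob C. module (rng R X) (mdl M X)" using assms(1) unfolding module_sheaf_def by (elim conjE)
  then show ?thesis using assms(2) by blast
qed

lemma ms_add: assumes "module_sheaf C R M" "X \<in> Ob C" "Y \<in> Ob C" "f \<in> Hom C Y X"
  "x \<in> carrier (mdl M X)" "y \<in> carrier (mdl M X)"
  shows "mrs M X Y f (x \<oplus>\<^bsub>mdl M X\<^esub> y) = mrs M X Y f x \<oplus>\<^bsub>mdl M Y\<^esub> mrs M X Y f y"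
proof -
  have "\<forall>X\<in>Ob C. \<forall>Y\<in>Ob C. \<forall>f\<in>Hom C Y X.
        \<forall>x\<in>carrier (mdl M X). \<forall>y\<in>carrier (mdl M X).
          mrs M X Y f (x \<oplus>\<^bsub>mdl M X\<^esub> y) = mrs M X Y f x \<oplus>\<^bsub>mdl M Y\<^esub> mrs M X Y f y"
    using assms(1) unfolding module_sheaf_def by (elim conjE)
  then show ?thesis using assms(2-) by (elim ballE) auto
qed

lemma ms_smult: assumes "module_sheaf C R M" "X \<in> Ob C" "Y \<in> Ob C" "f \<in> Hom C Y X"
  "a \<in> carrier (rng R X)" "x \<in> carrier (mdl M X)"
  shows "mrs M X Y f (a \<odot>\<^bsub>mdl M X\<^esub> x) = rrs R X Y f a \<odot>\<^bsub>mdl M Y\<^esub> mrs M X Y f x"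
proof -
  have "\<forall>X\<in>Ob C. \<forall>Y\<in>Ob C. \<forall>f\<in>Hom C Y X.
        \<forall>a\<in>carrier (rng R X). \<forall>x\<in>carrier (mdl M X).
          mrs M X Y f (a \<odot>\<^bsub>mdl M X\<^esub> x) = rrs R X Y f a \<odot>\<^bsub>mdl M Y\<^esub> mrs M X Y f x"
    using assms(1) unfolding module_sheaf_def by (elim conjE)
  then show ?thesis using assms(2-) by (elim ballE) auto
qed

lemma ms_sheaf: assumes "module_sheaf C R M" shows "sheaf C (\<lambda>X. carrier (mdl M X)) (mrs M)"
  using assms unfolding module_sheaf_def by (elim conjE)

lemma sheaf_presheaf: "sheaf C F rs \<Longrightarrow> presheaf C F rs"
  unfolding sheaf_def by (elim conjE)

lemma psh_closed: assumes "presheaf C F rs" "X \<in> Ob C" "Y \<in> Ob C" "f \<in> Hom C Y X" "s \<in> F X"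
  shows "rs X Y f s \<in> F Y"
proof -
  have "\<forall>X\<in>Ob C. \<forall>Y\<in>Ob C. \<forall>f\<in>Hom C Y X. \<forall>s\<in>F X. rs X Y f s \<in> F Y"
    using assms(1) unfolding presheaf_def by (elim conjE)
  then show ?thesis using assms(2-) by (elim ballE) auto
qed

lemma psh_comp: assumes "presheaf C F rs" "X \<in> Ob C" "Y \<in> Ob C" "Z \<in> Ob C" "f \<in> Hom C Y X" "g \<in> Hom C Z Y" "s \<in> F X"
  shows "rs X Z (cmp C f g) s = rs Y Z g (rs X Y f s)"
proof -
  have "\<forall>X\<in>Ob C. \<forall>Y\<in>Ob C. \<forall>Z\<in>Ob C. \<forall>f\<in>Hom C Y X. \<forall>g\<in>Hom C Z Y. \<forall>s\<in>F X.
         rs X Z (cmp C f g) s = rs Y Z g (rs X Y f s)"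
    using assms(1) unfolding presheaf_def by (elim conjE)
  then show ?thesis using assms(2-) by (elim ballE) auto
qed

lemma ms_closed: assumes "module_sheaf C R M" "X \<in> Ob C" "Y \<in> Ob C" "f \<in> Hom C Y X" "s \<in> carrier (mdl M X)"
  shows "mrs M X Y f s \<in> carrier (mdl M Y)"
  using psh_closed[OF sheaf_presheaf[OF ms_sheaf[OF assms(1)]] assms(2-)] by simp

lemma ms_comp: assumes "module_sheaf C R M" "X \<in> Ob C" "Y \<in> Ob C" "Z \<in> Ob C" "f \<in> Hom C Y X" "g \<in> Hom C Z Y"
  "s \<in> carrier (mdl M X)" shows "mrs M X Z (cmp C f g) s = mrs M Y Z g (mrs M X Y f s)"
  using psh_comp[OF sheaf_presheaf[OF ms_sheaf[OF assms(1)]] assms(2-)] by simp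

lemma rs_closed: assumes "ring_sheaf C R" "X \<in> Ob C" "Y \<in> Ob C" "f \<in> Hom C Y X" "a \<in> carrier (rng R X)"
  shows "rrs R X Y f a \<in> carrier (rng R Y)"
proof -
  have "\<forall>X\<in>Ob C. \<forall>Y\<in>Ob C. \<forall>f\<in>Hom C Y X. rrs R X Y f \<in> ring_hom (rng R X) (rng R Y)"
    using assms(1) unfolding ring_sheaf_def by (elim conjE)
  then have "rrs R X Y f \<in> ring_hom (rng R X) (rng R Y)" using assms(2-4) by (elim ballE) auto
  then show ?thesis using assms(5) ring_hom_closed by metis
qed

lemma mm_linear: assumes "module_morphism C R M N h" "X \<in> Ob C" shows "linear_map (rng R X) (mdl M X) (mdl N X) (h X)"
proof -
  have "\<forall>X\<in>Ob C. linear_map (rng R X) (mdl M X) (mdl N X) (h X)" using assms(1) unfolding module_morphism_def by (elim conjE)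
  then show ?thesis using assms(2) by blast
qed

lemma mm_nat: assumes "module_morphism C R M N h" "X \<in> Ob C" "Y \<in> Ob C" "f \<in> Hom C Y X" "s \<in> carrier (mdl M X)"
  shows "h Y (mrs M X Y f s) = mrs N X Y f (h X s)"
proof -
  have "\<forall>X\<in>Ob C. \<forall>Y\<in>Ob C. \<forall>f\<in>Hom C Y X. \<forall>s\<in>carrier (mdl M X).
        h Y (mrs M X Y f s) = mrs N X Y f (h X s)" using assms(1) unfolding module_morphism_def by (elim conjE)
  then show ?thesis using assms(2-) by (elim ballE) auto
qed

lemma lin_closed: "linear_map A M N h \<Longrightarrow> x \<in> carrier M \<Longrightarrow> h x \<in> carrier N"
  unfolding linear_map_def by blast
lemma lin_add: "linear_map A M N h \<Longrightarrow> x \<in> carrier M \<Longrightarrow> y \<in> carrier M \<Longrightarrow> h (x \<oplus>\<^bsub>M\<^esub> y) = h x \<oplus>\<^bsub>N\<^esub> h y"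
  unfolding linear_map_def by blast
lemma lin_smult: "linear_map A M N h \<Longrightarrow> a \<in> carrier A \<Longrightarrow> x \<in> carrier M \<Longrightarrow> h (a \<odot>\<^bsub>M\<^esub> x) = a \<odot>\<^bsub>N\<^esub> h x"
  unfolding linear_map_def by blast

lemma add_hom_zero:
  assumes M: "abelian_group M" and N: "abelian_group N" and cl: "\<And>x. x \<in> carrier M \<Longrightarrow> h x \<in> carrier N"
    and add: "\<And>x y. x \<in> carrier M \<Longrightarrow> y \<in> carrier M \<Longrightarrow> h (x \<oplus>\<^bsub>M\<^esub> y) = h x \<oplus>\<^bsub>N\<^esub> h y"
  shows "h \<zero>\<^bsub>M\<^esub> = \<zero>\<^bsub>N\<^esub>"
proof -
  interpret M: abelian_group M by fact
  interpret N: abelian_group N by fact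
  have "h \<zero>\<^bsub>M\<^esub> = h \<zero>\<^bsub>M\<^esub> \<oplus>\<^bsub>N\<^esub> h \<zero>\<^bsub>M\<^esub>" using add[of "\<zero>\<^bsub>M\<^esub>" "\<zero>\<^bsub>M\<^esub>"] by simp
  then show ?thesis using cl[of "\<zero>\<^bsub>M\<^esub>"] by simp
qed

lemma add_hom_finsum:
  assumes M: "abelian_group M" and N: "abelian_group N" and cl: "\<And>x. x \<in> carrier M \<Longrightarrow> h x \<in> carrier N"
    and add: "\<And>x y. x \<in> carrier M \<Longrightarrow> y \<in> carrier M \<Longrightarrow> h (x \<oplus>\<^bsub>M\<^esub> y) = h x \<oplus>\<^bsub>N\<^esub> h y"
    and fin: "finite I" and f: "f \<in> I \<rightarrow> carrier M"
  shows "h (finsum M f I) = finsum N (\<lambda>i. h (f i)) I"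
  using fin f
proof (induction I rule: finite_induct)
  case empty
  interpret M: abelian_group M by fact
  interpret N: abelian_group N by fact
  show ?case using add_hom_zero[OF M N cl add] by simp
next
  case (insert a F)
  interpret M: abelian_group M by fact
  interpret N: abelian_group N by fact
  have fa: "f a \<in> carrier M" and fF: "f \<in> F \<rightarrow> carrier M" using insert.prems by auto
  have "h (finsum M f (insert a F)) = h (f a \<oplus>\<^bsub>M\<^esub> finsum M f F)"
    using M.finsum_insert[OF insert.hyps fF fa] by simp
  also have "\<dots> = h (f a) \<oplus>\<^bsub>N\<^esub> h (finsum M f F)" using add fa M.finsum_closed[OF fF] by simp
  also have "\<dots> = h (f a) \<oplus>\<^bsub>N\<^esub> finsum N (\<lambda>i. h (f i)) F" using insert.IH[OF fF] by simp
  also have "\<dots> = finsum N (\<lambda>i. h (f i)) (insert a F)"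
    using N.finsum_insert[OF insert.hyps, of "\<lambda>i. h (f i)"] cl fa fF by (auto simp: Pi_iff)
  finally show ?case .
qed

lemma add_hom_minus:
  assumes M: "abelian_group M" and N: "abelian_group N" and cl: "\<And>x. x \<in> carrier M \<Longrightarrow> h x \<in> carrier N"
    and add: "\<And>x y. x \<in> carrier M \<Longrightarrow> y \<in> carrier M \<Longrightarrow> h (x \<oplus>\<^bsub>M\<^esub> y) = h x \<oplus>\<^bsub>N\<^esub> h y"
    and x: "x \<in> carrier M" and y: "y \<in> carrier M"
  shows "h (x \<ominus>\<^bsub>M\<^esub> y) = h x \<ominus>\<^bsub>N\<^esub> h y"
proof -
  interpret M: abelian_group M by fact
  interpret N: abelian_group N by fact
  have "h x = h ((x \<ominus>\<^bsub>M\<^esub> y) \<oplus>\<^bsub>M\<^esub> y)" using x y by (simp add: M.minus_eq M.a_assoc M.l_neg)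
  also have "\<dots> = h (x \<ominus>\<^bsub>M\<^esub> y) \<oplus>\<^bsub>N\<^esub> h y" using add x y by simp
  finally have e: "h x = h (x \<ominus>\<^bsub>M\<^esub> y) \<oplus>\<^bsub>N\<^esub> h y" .
  have c: "h (x \<ominus>\<^bsub>M\<^esub> y) \<in> carrier N" "h y \<in> carrier N" using cl x y by auto
  show ?thesis using e c by (simp add: N.minus_eq N.a_assoc N.r_neg)
qed

section \<open>Linear combinations\<close>

lemma lc_closed: assumes "module A M" "finite I" "c \<in> I \<rightarrow> carrier A" "b \<in> I \<rightarrow> carrier M"
  shows "finsum M (\<lambda>i. c i \<odot>\<^bsub>M\<^esub> b i) I \<in> carrier M"
proof -
  interpret module A M by fact
  show ?thesis using assms(3,4) by (intro finsum_closed) (auto simp: Pi_iff)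
qed

lemma lc_add: assumes "module A M" "finite I" "c \<in> I \<rightarrow> carrier A" "d \<in> I \<rightarrow> carrier A" "b \<in> I \<rightarrow> carrier M"
  shows "finsum M (\<lambda>i. (c i \<oplus>\<^bsub>A\<^esub> d i) \<odot>\<^bsub>M\<^esub> b i) I
     = finsum M (\<lambda>i. c i \<odot>\<^bsub>M\<^esub> b i) I \<oplus>\<^bsub>M\<^esub> finsum M (\<lambda>i. d i \<odot>\<^bsub>M\<^esub> b i) I"
proof -
  interpret module A M by fact
  have "finsum M (\<lambda>i. (c i \<oplus>\<^bsub>A\<^esub> d i) \<odot>\<^bsub>M\<^esub> b i) I = finsum M (\<lambda>i. c i \<odot>\<^bsub>M\<^esub> b i \<oplus>\<^bsub>M\<^esub> d i \<odot>\<^bsub>M\<^esub> b i) I"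
    using assms(3-5) by (intro finsum_cong') (auto simp: smult_l_distr Pi_iff)
  also have "\<dots> = finsum M (\<lambda>i. c i \<odot>\<^bsub>M\<^esub> b i) I \<oplus>\<^bsub>M\<^esub> finsum M (\<lambda>i. d i \<odot>\<^bsub>M\<^esub> b i) I"
    using assms(3-5) by (intro finsum_addf) (auto simp: Pi_iff)
  finally show ?thesis .
qed

lemma lc_smult: assumes "module A M" "finite I" "a \<in> carrier A" "c \<in> I \<rightarrow> carrier A" "b \<in> I \<rightarrow> carrier M"
  shows "a \<odot>\<^bsub>M\<^esub> finsum M (\<lambda>i. c i \<odot>\<^bsub>M\<^esub> b i) I = finsum M (\<lambda>i. (a \<otimes>\<^bsub>A\<^esub> c i) \<odot>\<^bsub>M\<^esub> b i) I"
proof -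
  interpret module A M by fact
  have "a \<odot>\<^bsub>M\<^esub> finsum M (\<lambda>i. c i \<odot>\<^bsub>M\<^esub> b i) I = finsum M (\<lambda>i. a \<odot>\<^bsub>M\<^esub> (c i \<odot>\<^bsub>M\<^esub> b i)) I"
    using assms(2-5) by (intro finsum_smult_ldistr) (auto simp: Pi_iff)
  also have "\<dots> = finsum M (\<lambda>i. (a \<otimes>\<^bsub>A\<^esub> c i) \<odot>\<^bsub>M\<^esub> b i) I"
    using assms(3-5) by (intro finsum_cong') (auto simp: smult_assoc1 Pi_iff)
  finally show ?thesis .
qed

lemma lc_cong: assumes "module A M" "c' \<in> I \<rightarrow> carrier A" "b' \<in> I \<rightarrow> carrier M"
   "\<And>i. i \<in> I \<Longrightarrow> c i = c' i" "\<And>i. i \<in> I \<Longrightarrow> b i = b' i"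
  shows "finsum M (\<lambda>i. c i \<odot>\<^bsub>M\<^esub> b i) I = finsum M (\<lambda>i. c' i \<odot>\<^bsub>M\<^esub> b' i) I"
proof -
  interpret module A M by fact
  show ?thesis using assms(2-) by (intro finsum_cong') (auto simp: Pi_iff)
qed

lemma lc_linear: assumes "module A M" "module A N" "linear_map A M N h" "finite I" "c \<in> I \<rightarrow> carrier A" "b \<in> I \<rightarrow> carrier M"
  shows "h (finsum M (\<lambda>i. c i \<odot>\<^bsub>M\<^esub> b i) I) = finsum N (\<lambda>i. c i \<odot>\<^bsub>N\<^esub> h (b i)) I"
proof -
  interpret M: module A M by fact
  interpret N: module A N by fact
  have "h (finsum M (\<lambda>i. c i \<odot>\<^bsub>M\<^esub> b i) I) = finsum N (\<lambda>i. h (c i \<odot>\<^bsub>M\<^esub> b i)) I"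
    using assms(4-6) lin_closed[OF assms(3)] lin_add[OF assms(3)]
    by (intro add_hom_finsum) (auto intro: M.abelian_group_axioms N.abelian_group_axioms)
  also have "\<dots> = finsum N (\<lambda>i. c i \<odot>\<^bsub>N\<^esub> h (b i)) I"
    using assms(5,6) lin_closed[OF assms(3)] lin_smult[OF assms(3)] by (intro N.finsum_cong') (auto simp: Pi_iff)
  finally show ?thesis .
qed

lemma lc_restrict: assumes "module_sheaf C R M" "ring_sheaf C R" "X \<in> Ob C" "Y \<in> Ob C" "f \<in> Hom C Y X"
  "finite I" "c \<in> I \<rightarrow> carrier (rng R X)" "b \<in> I \<rightarrow> carrier (mdl M X)"
  shows "mrs M X Y f (finsum (mdl M X) (\<lambda>i. c i \<odot>\<^bsub>mdl M X\<^esub> b i) I)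
    = finsum (mdl M Y) (\<lambda>i. rrs R X Y f (c i) \<odot>\<^bsub>mdl M Y\<^esub> mrs M X Y f (b i)) I"
proof -
  interpret MX: module "rng R X" "mdl M X" by (rule ms_module[OF assms(1,3)])
  interpret MY: module "rng R Y" "mdl M Y" by (rule ms_module[OF assms(1,4)])
  have "mrs M X Y f (finsum (mdl M X) (\<lambda>i. c i \<odot>\<^bsub>mdl M X\<^esub> b i) I)
     = finsum (mdl M Y) (\<lambda>i. mrs M X Y f (c i \<odot>\<^bsub>mdl M X\<^esub> b i)) I"
    using assms(6-8) ms_closed[OF assms(1,3,4,5)] ms_add[OF assms(1,3,4,5)]
    by (intro add_hom_finsum) (auto intro: MX.abelian_group_axioms MY.abelian_group_axioms)
  also have "\<dots> = finsum (mdl M Y) (\<lambda>i. rrs R X Y f (c i) \<odot>\<^bsub>mdl M Y\<^esub> mrs M X Y f (b i)) I"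
    using assms(7,8) ms_smult[OF assms(1,3,4,5)] ms_closed[OF assms(1,3,4,5)] rs_closed[OF assms(2,3,4,5)]
    by (intro MY.finsum_cong') (auto simp: Pi_iff)
  finally show ?thesis .
qed




definition basis_on :: "('o, 'a) site \<Rightarrow> ('o, 'a, 'r) ringsheaf \<Rightarrow> ('o, 'a, 'r, 'v) modsheaf
     \<Rightarrow> nat \<Rightarrow> 'o \<Rightarrow> (nat \<Rightarrow> 'v) \<Rightarrow> bool" where
  "basis_on C R M m U e \<longleftrightarrow> (\<forall>i<m. e i \<in> carrier (mdl M U)) \<and>
        (\<forall>X\<in>Ob C. \<forall>u\<in>Hom C X U. \<forall>s\<in>carrier (mdl M X).
           \<exists>!c. c \<in> {..<m} \<rightarrow>\<^sub>E carrier (rng R X) \<and>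
              s = (\<Oplus>\<^bsub>mdl M X\<^esub>i\<in>{..<m}. c i \<odot>\<^bsub>mdl M X\<^esub> mrs M U X u (e i)))"

lemma free_on_iff: "free_on C R M m U \<longleftrightarrow> (\<exists>e. basis_on C R M m U e)"
  unfolding free_on_def basis_on_def ..

lemma basis_el: assumes "basis_on C R M m U e" "i < m" shows "e i \<in> carrier (mdl M U)"
proof -
  have "\<forall>i<m. e i \<in> carrier (mdl M U)" using assms(1) unfolding basis_on_def by (elim conjE)
  then show ?thesis using assms(2) by simp
qed

lemma basis_ex1: assumes "basis_on C R M m U e" "X \<in> Ob C" "u \<in> Hom C X U" "s \<in> carrier (mdl M X)"
  shows "\<exists>!c. c \<in> {..<m} \<rightarrow>\<^sub>E carrier (rng R X) \<and>
              s = (\<Oplus>\<^bsub>mdl M X\<^esub>i\<in>{..<m}. c i \<odot>\<^bsub>mdl M X\<^esub> mrs M U X u (e i))"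
proof -
  have "\<forall>X\<in>Ob C. \<forall>u\<in>Hom C X U. \<forall>s\<in>carrier (mdl M X).
           \<exists>!c. c \<in> {..<m} \<rightarrow>\<^sub>E carrier (rng R X) \<and>
              s = (\<Oplus>\<^bsub>mdl M X\<^esub>i\<in>{..<m}. c i \<odot>\<^bsub>mdl M X\<^esub> mrs M U X u (e i))"
    using assms(1) unfolding basis_on_def by (elim conjE)
  from this[THEN bspec, OF assms(2), THEN bspec, OF assms(3), THEN bspec, OF assms(4)] show ?thesis .
qed

definition coef where
  "coef C R M m U e X u s = (THE c. c \<in> {..<m} \<rightarrow>\<^sub>E carrier (rng R X) \<and>
              s = (\<Oplus>\<^bsub>mdl M X\<^esub>i\<in>{..<m}. c i \<odot>\<^bsub>mdl M X\<^esub> mrs M U X u (e i)))"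

lemma coef_prop: assumes "basis_on C R M m U e" "X \<in> Ob C" "u \<in> Hom C X U" "s \<in> carrier (mdl M X)"
  shows "coef C R M m U e X u s \<in> {..<m} \<rightarrow>\<^sub>E carrier (rng R X)"
    "s = (\<Oplus>\<^bsub>mdl M X\<^esub>i\<in>{..<m}. coef C R M m U e X u s i \<odot>\<^bsub>mdl M X\<^esub> mrs M U X u (e i))"
  using theI'[OF basis_ex1[OF assms]] unfolding coef_def by auto

lemma coef_unique: assumes "basis_on C R M m U e" "X \<in> Ob C" "u \<in> Hom C X U" "s \<in> carrier (mdl M X)"
  "c \<in> {..<m} \<rightarrow>\<^sub>E carrier (rng R X)" "s = (\<Oplus>\<^bsub>mdl M X\<^esub>i\<in>{..<m}. c i \<odot>\<^bsub>mdl M X\<^esub> mrs M U X u (e i))"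
  shows "coef C R M m U e X u s = c"
  using the1_equality[OF basis_ex1[OF assms(1-4)]] assms(5,6) unfolding coef_def by auto

lemma basis_pull:
  assumes site: "is_site C" and MS: "module_sheaf C R M" and U: "U \<in> Ob C" and V: "V \<in> Ob C"
    and f: "f \<in> Hom C V U" and B: "basis_on C R M m U e"
  shows "basis_on C R M m V (\<lambda>i. mrs M U V f (e i))"
  unfolding basis_on_def
proof (intro conjI allI impI ballI)
  fix i assume "i < m" then show "mrs M U V f (e i) \<in> carrier (mdl M V)"
    by (intro ms_closed[OF MS U V f] basis_el[OF B])
next
  fix X u s assume X: "X \<in> Ob C" and u: "u \<in> Hom C X V" and s: "s \<in> carrier (mdl M X)"
  have fu: "cmp C f u \<in> Hom C X U" by (rule cat_comp[OF site X V U u f])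
  interpret MX: module "rng R X" "mdl M X" by (rule ms_module[OF MS X])
  have eq: "\<And>i. i < m \<Longrightarrow> mrs M V X u (mrs M U V f (e i)) = mrs M U X (cmp C f u) (e i)"
    by (rule ms_comp[OF MS U V X f u basis_el[OF B], symmetric])
  have cl: "\<And>i. i < m \<Longrightarrow> mrs M U X (cmp C f u) (e i) \<in> carrier (mdl M X)"
    by (intro ms_closed[OF MS U X fu] basis_el[OF B])
  have "\<And>c. c \<in> {..<m} \<rightarrow>\<^sub>E carrier (rng R X) \<Longrightarrow>
      (\<Oplus>\<^bsub>mdl M X\<^esub>i\<in>{..<m}. c i \<odot>\<^bsub>mdl M X\<^esub> mrs M V X u (mrs M U V f (e i)))
    = (\<Oplus>\<^bsub>mdl M X\<^esub>i\<in>{..<m}. c i \<odot>\<^bsub>mdl M X\<^esub> mrs M U X (cmp C f u) (e i))"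
    by (rule lc_cong[OF ms_module[OF MS X]]) (use eq cl in \<open>auto simp: PiE_iff\<close>)
  then have "\<And>c. (c \<in> {..<m} \<rightarrow>\<^sub>E carrier (rng R X) \<and>
      s = (\<Oplus>\<^bsub>mdl M X\<^esub>i\<in>{..<m}. c i \<odot>\<^bsub>mdl M X\<^esub> mrs M V X u (mrs M U V f (e i))))
    = (c \<in> {..<m} \<rightarrow>\<^sub>E carrier (rng R X) \<and>
      s = (\<Oplus>\<^bsub>mdl M X\<^esub>i\<in>{..<m}. c i \<odot>\<^bsub>mdl M X\<^esub> mrs M U X (cmp C f u) (e i)))"
    by (intro iffI conjI; elim conjE; simp)
  then show "\<exists>!c. c \<in> {..<m} \<rightarrow>\<^sub>E carrier (rng R X) \<and>
      s = (\<Oplus>\<^bsub>mdl M X\<^esub>i\<in>{..<m}. c i \<odot>\<^bsub>mdl M X\<^esub> mrs M V X u (mrs M U V f (e i)))"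
    using basis_ex1[OF B X fu s] by (simp only:)
qed


lemma split_lemma:
  assumes site: "is_site C" and RS: "ring_sheaf C R" and PS: "module_sheaf C R P" and NS: "module_sheaf C R N0"
    and pim: "module_morphism C R P N0 pi" and U: "U \<in> Ob C" and B: "basis_on C R N0 m U e"
    and l: "\<And>i. i < m \<Longrightarrow> l i \<in> carrier (mdl P U)" and pil: "\<And>i. i < m \<Longrightarrow> pi U (l i) = e i"
  shows "splits_on C R P N0 pi U"
proof -
  define cf where "cf = coef C R N0 m U e"
  define sig where "sig = (\<lambda>X u s. \<Oplus>\<^bsub>mdl P X\<^esub>i\<in>{..<m}. cf X u s i \<odot>\<^bsub>mdl P X\<^esub> mrs P U X u (l i))"
  have Bc: "\<And>X u. X \<in> Ob C \<Longrightarrow> u \<in> Hom C X U \<Longrightarrow> (\<lambda>i. mrs N0 U X u (e i)) \<in> {..<m} \<rightarrow> carrier (mdl N0 X)"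
    using ms_closed[OF NS U] basis_el[OF B] by auto
  have Lc: "\<And>X u. X \<in> Ob C \<Longrightarrow> u \<in> Hom C X U \<Longrightarrow> (\<lambda>i. mrs P U X u (l i)) \<in> {..<m} \<rightarrow> carrier (mdl P X)"
    using ms_closed[OF PS U] l by auto
  have cfc: "\<And>X u s. X \<in> Ob C \<Longrightarrow> u \<in> Hom C X U \<Longrightarrow> s \<in> carrier (mdl N0 X) \<Longrightarrow> cf X u s \<in> {..<m} \<rightarrow>\<^sub>E carrier (rng R X)"
    unfolding cf_def by (rule coef_prop(1)[OF B])
  have cfs: "\<And>X u s. X \<in> Ob C \<Longrightarrow> u \<in> Hom C X U \<Longrightarrow> s \<in> carrier (mdl N0 X) \<Longrightarrow>
     s = (\<Oplus>\<^bsub>mdl N0 X\<^esub>i\<in>{..<m}. cf X u s i \<odot>\<^bsub>mdl N0 X\<^esub> mrs N0 U X u (e i))"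
    unfolding cf_def by (rule coef_prop(2)[OF B])
  have cfu: "\<And>X u s c. X \<in> Ob C \<Longrightarrow> u \<in> Hom C X U \<Longrightarrow> s \<in> carrier (mdl N0 X) \<Longrightarrow> c \<in> {..<m} \<rightarrow>\<^sub>E carrier (rng R X) \<Longrightarrow>
     s = (\<Oplus>\<^bsub>mdl N0 X\<^esub>i\<in>{..<m}. c i \<odot>\<^bsub>mdl N0 X\<^esub> mrs N0 U X u (e i)) \<Longrightarrow> cf X u s = c"
    unfolding cf_def by (rule coef_unique[OF B])
  have main: "linear_map (rng R X) (mdl N0 X) (mdl P X) (sig X u) \<and> (\<forall>s\<in>carrier (mdl N0 X). pi X (sig X u s) = s)"
    if X: "X \<in> Ob C" and u: "u \<in> Hom C X U" for X u
  proof -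
    interpret NX: module "rng R X" "mdl N0 X" by (rule ms_module[OF NS X])
    interpret PX: module "rng R X" "mdl P X" by (rule ms_module[OF PS X])
    have NM: "module (rng R X) (mdl N0 X)" and PM: "module (rng R X) (mdl P X)" by (rule ms_module[OF NS X], rule ms_module[OF PS X])
    note Bc = Bc[OF X u] and Lc = Lc[OF X u]
    have cfP: "\<And>s. s \<in> carrier (mdl N0 X) \<Longrightarrow> cf X u s \<in> {..<m} \<rightarrow> carrier (rng R X)"
      using cfc[OF X u] by (auto simp: PiE_iff)
    have lin: "linear_map (rng R X) (mdl N0 X) (mdl P X) (sig X u)"
      unfolding linear_map_def
    proof (intro conjI ballI)
      fix s assume s: "s \<in> carrier (mdl N0 X)"
      show "sig X u s \<in> carrier (mdl P X)" unfolding sig_def by (rule lc_closed[OF PM _ cfP[OF s] Lc]) simp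
    next
      fix s t assume s: "s \<in> carrier (mdl N0 X)" and t: "t \<in> carrier (mdl N0 X)"
      define d where "d = (\<lambda>i\<in>{..<m}. cf X u s i \<oplus>\<^bsub>rng R X\<^esub> cf X u t i)"
      have dE: "d \<in> {..<m} \<rightarrow>\<^sub>E carrier (rng R X)" unfolding d_def using cfP[OF s] cfP[OF t] by (auto simp: PiE_iff Pi_iff)
      have dP: "d \<in> {..<m} \<rightarrow> carrier (rng R X)" using dE by (auto simp: PiE_iff)
      have st: "s \<oplus>\<^bsub>mdl N0 X\<^esub> t \<in> carrier (mdl N0 X)" using s t by simp
      have "s \<oplus>\<^bsub>mdl N0 X\<^esub> t = (\<Oplus>\<^bsub>mdl N0 X\<^esub>i\<in>{..<m}. (cf X u s i \<oplus>\<^bsub>rng R X\<^esub> cf X u t i) \<odot>\<^bsub>mdl N0 X\<^esub> mrs N0 U X u (e i))"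
        using lc_add[OF NM _ cfP[OF s] cfP[OF t] Bc] cfs[OF X u s] cfs[OF X u t] by simp
      also have "\<dots> = (\<Oplus>\<^bsub>mdl N0 X\<^esub>i\<in>{..<m}. d i \<odot>\<^bsub>mdl N0 X\<^esub> mrs N0 U X u (e i))"
        by (rule lc_cong[OF NM dP Bc]) (auto simp: d_def)
      finally have cst: "cf X u (s \<oplus>\<^bsub>mdl N0 X\<^esub> t) = d" using cfu[OF X u st dE] by simp
      have "sig X u (s \<oplus>\<^bsub>mdl N0 X\<^esub> t) = (\<Oplus>\<^bsub>mdl P X\<^esub>i\<in>{..<m}. d i \<odot>\<^bsub>mdl P X\<^esub> mrs P U X u (l i))"
        unfolding sig_def cst ..
      also have "\<dots> = (\<Oplus>\<^bsub>mdl P X\<^esub>i\<in>{..<m}. (cf X u s i \<oplus>\<^bsub>rng R X\<^esub> cf X u t i) \<odot>\<^bsub>mdl P X\<^esub> mrs P U X u (l i))"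
        by (rule lc_cong[OF PM _ Lc]) (use cfP[OF s] cfP[OF t] in \<open>auto simp: d_def Pi_iff\<close>)
      also have "\<dots> = sig X u s \<oplus>\<^bsub>mdl P X\<^esub> sig X u t"
        unfolding sig_def by (rule lc_add[OF PM _ cfP[OF s] cfP[OF t] Lc]) simp
      finally show "sig X u (s \<oplus>\<^bsub>mdl N0 X\<^esub> t) = sig X u s \<oplus>\<^bsub>mdl P X\<^esub> sig X u t" .
    next
      fix a s assume a: "a \<in> carrier (rng R X)" and s: "s \<in> carrier (mdl N0 X)"
      define d where "d = (\<lambda>i\<in>{..<m}. a \<otimes>\<^bsub>rng R X\<^esub> cf X u s i)"
      have dE: "d \<in> {..<m} \<rightarrow>\<^sub>E carrier (rng R X)" unfolding d_def using cfP[OF s] a by (auto simp: PiE_iff Pi_iff)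
      have dP: "d \<in> {..<m} \<rightarrow> carrier (rng R X)" using dE by (auto simp: PiE_iff)
      have st: "a \<odot>\<^bsub>mdl N0 X\<^esub> s \<in> carrier (mdl N0 X)" using a s by simp
      have "a \<odot>\<^bsub>mdl N0 X\<^esub> s = (\<Oplus>\<^bsub>mdl N0 X\<^esub>i\<in>{..<m}. (a \<otimes>\<^bsub>rng R X\<^esub> cf X u s i) \<odot>\<^bsub>mdl N0 X\<^esub> mrs N0 U X u (e i))"
        using lc_smult[OF NM _ a cfP[OF s] Bc] cfs[OF X u s] by simp
      also have "\<dots> = (\<Oplus>\<^bsub>mdl N0 X\<^esub>i\<in>{..<m}. d i \<odot>\<^bsub>mdl N0 X\<^esub> mrs N0 U X u (e i))"
        by (rule lc_cong[OF NM dP Bc]) (auto simp: d_def)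
      finally have cst: "cf X u (a \<odot>\<^bsub>mdl N0 X\<^esub> s) = d" using cfu[OF X u st dE] by simp
      have "sig X u (a \<odot>\<^bsub>mdl N0 X\<^esub> s) = (\<Oplus>\<^bsub>mdl P X\<^esub>i\<in>{..<m}. d i \<odot>\<^bsub>mdl P X\<^esub> mrs P U X u (l i))"
        unfolding sig_def cst ..
      also have "\<dots> = (\<Oplus>\<^bsub>mdl P X\<^esub>i\<in>{..<m}. (a \<otimes>\<^bsub>rng R X\<^esub> cf X u s i) \<odot>\<^bsub>mdl P X\<^esub> mrs P U X u (l i))"
        by (rule lc_cong[OF PM _ Lc]) (use cfP[OF s] a in \<open>auto simp: d_def Pi_iff\<close>)
      also have "\<dots> = a \<odot>\<^bsub>mdl P X\<^esub> sig X u s"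
        unfolding sig_def by (rule lc_smult[OF PM _ a cfP[OF s] Lc, symmetric]) simp
      finally show "sig X u (a \<odot>\<^bsub>mdl N0 X\<^esub> s) = a \<odot>\<^bsub>mdl P X\<^esub> sig X u s" .
    qed
    have sec: "pi X (sig X u s) = s" if s: "s \<in> carrier (mdl N0 X)" for s
    proof -
      have "pi X (sig X u s) = (\<Oplus>\<^bsub>mdl N0 X\<^esub>i\<in>{..<m}. cf X u s i \<odot>\<^bsub>mdl N0 X\<^esub> pi X (mrs P U X u (l i)))"
        unfolding sig_def by (rule lc_linear[OF PM NM mm_linear[OF pim X] _ cfP[OF s] Lc]) simp
      also have "\<dots> = (\<Oplus>\<^bsub>mdl N0 X\<^esub>i\<in>{..<m}. cf X u s i \<odot>\<^bsub>mdl N0 X\<^esub> mrs N0 U X u (e i))"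
      proof (rule lc_cong[OF NM cfP[OF s] Bc])
        fix i assume "i \<in> {..<m}" then have i: "i < m" by simp
        show "pi X (mrs P U X u (l i)) = mrs N0 U X u (e i)"
          using mm_nat[OF pim U X u l[OF i]] pil[OF i] by simp
      qed simp
      also have "\<dots> = s" using cfs[OF X u s] by simp
      finally show ?thesis .
    qed
    show ?thesis using lin sec by blast
  qed
  have nat: "sig Y (cmp C u g) (mrs N0 X Y g s) = mrs P X Y g (sig X u s)"
    if X: "X \<in> Ob C" and Y: "Y \<in> Ob C" and u: "u \<in> Hom C X U" and g: "g \<in> Hom C Y X" and s: "s \<in> carrier (mdl N0 X)"
    for X Y u g s
  proof -
    have NY: "module (rng R Y) (mdl N0 Y)" and PY: "module (rng R Y) (mdl P Y)" by (rule ms_module[OF NS Y], rule ms_module[OF PS Y])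
    have ug: "cmp C u g \<in> Hom C Y U" by (rule cat_comp[OF site Y X U g u])
    have cfP: "cf X u s \<in> {..<m} \<rightarrow> carrier (rng R X)"
      using cfc[OF X u s] by (auto simp: PiE_iff)
    define d where "d = (\<lambda>i\<in>{..<m}. rrs R X Y g (cf X u s i))"
    have dE: "d \<in> {..<m} \<rightarrow>\<^sub>E carrier (rng R Y)" unfolding d_def using cfP rs_closed[OF RS X Y g] by (auto simp: PiE_iff Pi_iff)
    have dP: "d \<in> {..<m} \<rightarrow> carrier (rng R Y)" using dE by (auto simp: PiE_iff)
    have gs: "mrs N0 X Y g s \<in> carrier (mdl N0 Y)" by (rule ms_closed[OF NS X Y g s])
    have "mrs N0 X Y g s = mrs N0 X Y g (\<Oplus>\<^bsub>mdl N0 X\<^esub>i\<in>{..<m}. cf X u s i \<odot>\<^bsub>mdl N0 X\<^esub> mrs N0 U X u (e i))"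
      using cfs[OF X u s] by simp
    also have "\<dots> = (\<Oplus>\<^bsub>mdl N0 Y\<^esub>i\<in>{..<m}. rrs R X Y g (cf X u s i) \<odot>\<^bsub>mdl N0 Y\<^esub> mrs N0 X Y g (mrs N0 U X u (e i)))"
      by (rule lc_restrict[OF NS RS X Y g _ cfP Bc[OF X u]]) simp
    also have "\<dots> = (\<Oplus>\<^bsub>mdl N0 Y\<^esub>i\<in>{..<m}. d i \<odot>\<^bsub>mdl N0 Y\<^esub> mrs N0 U Y (cmp C u g) (e i))"
    proof (rule lc_cong[OF NY dP Bc[OF Y ug]])
      fix i assume "i \<in> {..<m}" then have i: "i < m" by simp
      show "mrs N0 X Y g (mrs N0 U X u (e i)) = mrs N0 U Y (cmp C u g) (e i)"
        by (rule ms_comp[OF NS U X Y u g basis_el[OF B i], symmetric])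
    qed (simp add: d_def)
    finally have cst: "cf Y (cmp C u g) (mrs N0 X Y g s) = d" using cfu[OF Y ug gs dE] by simp
    have "sig Y (cmp C u g) (mrs N0 X Y g s) = (\<Oplus>\<^bsub>mdl P Y\<^esub>i\<in>{..<m}. d i \<odot>\<^bsub>mdl P Y\<^esub> mrs P U Y (cmp C u g) (l i))"
      unfolding sig_def cst ..
    also have "\<dots> = (\<Oplus>\<^bsub>mdl P Y\<^esub>i\<in>{..<m}. rrs R X Y g (cf X u s i) \<odot>\<^bsub>mdl P Y\<^esub> mrs P X Y g (mrs P U X u (l i)))"
    proof (rule lc_cong[OF PY])
      show "(\<lambda>i. rrs R X Y g (cf X u s i)) \<in> {..<m} \<rightarrow> carrier (rng R Y)" using cfP rs_closed[OF RS X Y g] by auto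
      show "(\<lambda>i. mrs P X Y g (mrs P U X u (l i))) \<in> {..<m} \<rightarrow> carrier (mdl P Y)"
        using ms_closed[OF PS X Y g] Lc[OF X u] by auto
      fix i assume "i \<in> {..<m}" then have i: "i < m" by simp
      show "mrs P U Y (cmp C u g) (l i) = mrs P X Y g (mrs P U X u (l i))"
        by (rule ms_comp[OF PS U X Y u g l[OF i]])
    qed (simp add: d_def)
    also have "\<dots> = mrs P X Y g (sig X u s)"
      unfolding sig_def by (rule lc_restrict[OF PS RS X Y g _ cfP Lc[OF X u], symmetric]) simp
    finally show ?thesis .
  qed
  show ?thesis unfolding splits_on_def
    by (rule exI[of _ sig]) (use main nat in blast)
qed


lemma ex1_uniq: "\<exists>!x. P x \<Longrightarrow> P a \<Longrightarrow> P b \<Longrightarrow> a = b" by blast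

lemma sheaf_glue: assumes "sheaf C F rs" "X \<in> Ob C" "S \<in> Cov C X" "matching_family C F rs S fam"
  shows "\<exists>!t. t \<in> F X \<and> (\<forall>(Y, f)\<in>S. rs X Y f t = fam Y f)"
proof -
  have "\<forall>X\<in>Ob C. \<forall>S\<in>Cov C X. \<forall>fam. matching_family C F rs S fam \<longrightarrow>
        (\<exists>!t. t \<in> F X \<and> (\<forall>(Y, f)\<in>S. rs X Y f t = fam Y f))" using assms(1) unfolding sheaf_def by (elim conjE)
  from this[THEN bspec, OF assms(2), THEN bspec, OF assms(3), THEN spec[of _ fam]] show ?thesis using assms(4) by (rule mp)
qed

lemma se_1: assumes "short_exact C R A B D i p" shows "module_morphism C R A B i"
  using assms unfolding short_exact_def by (elim conjE)

lemma se_2: assumes "short_exact C R A B D i p" shows "module_morphism C R B D p"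
  using assms unfolding short_exact_def by (elim conjE)

lemma se_3: assumes "short_exact C R A B D i p" shows "\<forall>X\<in>Ob C. inj_on (i X) (carrier (mdl A X))"
  using assms unfolding short_exact_def by (elim conjE)

lemma se_4: assumes "short_exact C R A B D i p" shows "\<forall>X\<in>Ob C. \<forall>s\<in>carrier (mdl A X). p X (i X s) = \<zero>\<^bsub>mdl D X\<^esub>"
  using assms unfolding short_exact_def by (elim conjE)

lemma se_5: assumes "short_exact C R A B D i p" shows "\<forall>X\<in>Ob C. \<forall>s\<in>carrier (mdl B X). p X s = \<zero>\<^bsub>mdl D X\<^esub> \<longrightarrow>
        locally C X (\<lambda>Y f. mrs B X Y f s \<in> i Y ` carrier (mdl A Y))"
  using assms unfolding short_exact_def by (elim conjE)

lemma se_6: assumes "short_exact C R A B D i p" shows "\<forall>X\<in>Ob C. \<forall>s\<in>carrier (mdl D X). locally C X (\<lambda>Y f. mrs D X Y f s \<in> p Y ` carrier (mdl B Y))"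
  using assms unfolding short_exact_def by (elim conjE)

lemma glue_kernel:
  assumes site: "is_site C" and PS: "module_sheaf C R P" and MS: "module_sheaf C R Mm1"
    and se: "short_exact C R Mm1 P N0 iota pi" and X: "X \<in> Ob C" and s: "s \<in> carrier (mdl P X)"
    and ps: "pi X s = \<zero>\<^bsub>mdl N0 X\<^esub>"
  shows "\<exists>a\<in>carrier (mdl Mm1 X). iota X a = s"
proof -
  note im = se_1[OF se]
  have inj: "\<And>Y. Y \<in> Ob C \<Longrightarrow> inj_on (iota Y) (carrier (mdl Mm1 Y))" using se_3[OF se] by (rule bspec)
  have loc: "locally C X (\<lambda>Y f. mrs P X Y f s \<in> iota Y ` carrier (mdl Mm1 Y))"
    using se_5[OF se, THEN bspec, OF X, THEN bspec, OF s] ps by (rule mp)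
  define S where "S = {(Y, h). Y \<in> Ob C \<and> h \<in> Hom C Y X \<and> mrs P X Y h s \<in> iota Y ` carrier (mdl Mm1 Y)}"
  have SC: "S \<in> Cov C X" using loc unfolding locally_def S_def .
  have Ssv: "is_sieve C X S" by (rule cov_sieve[OF site X SC])
  define fam where "fam = (\<lambda>Y h. THE a. a \<in> carrier (mdl Mm1 Y) \<and> iota Y a = mrs P X Y h s)"
  have fp: "fam Y h \<in> carrier (mdl Mm1 Y) \<and> iota Y (fam Y h) = mrs P X Y h s" if "(Y, h) \<in> S" for Y h
  proof -
    have Y: "Y \<in> Ob C" and ex: "mrs P X Y h s \<in> iota Y ` carrier (mdl Mm1 Y)" using that unfolding S_def by simp_all
    obtain a0 where a0: "a0 \<in> carrier (mdl Mm1 Y)" "iota Y a0 = mrs P X Y h s" using ex by (elim imageE) simp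
    have "\<exists>!a. a \<in> carrier (mdl Mm1 Y) \<and> iota Y a = mrs P X Y h s"
    proof (rule ex1I[of _ a0])
      show "a0 \<in> carrier (mdl Mm1 Y) \<and> iota Y a0 = mrs P X Y h s" using a0 by blast
      fix a assume "a \<in> carrier (mdl Mm1 Y) \<and> iota Y a = mrs P X Y h s"
      then show "a = a0" using a0 inj_onD[OF inj[OF Y], of a a0] by simp
    qed
    then show ?thesis unfolding fam_def by (rule theI')
  qed
  have mf: "matching_family C (\<lambda>X. carrier (mdl Mm1 X)) (mrs Mm1) S fam"
    unfolding matching_family_def
  proof (intro ballI, clarify, intro conjI ballI)
    fix Y h assume yh: "(Y, h) \<in> S"
    then show "fam Y h \<in> carrier (mdl Mm1 Y)" using fp by blast
    fix Z g assume Z: "Z \<in> Ob C" and g: "g \<in> Hom C Z Y"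
    have Y: "Y \<in> Ob C" and h: "h \<in> Hom C Y X" using sieve_sub[OF Ssv yh] by auto
    have zS: "(Z, cmp C h g) \<in> S" by (rule sieve_closed[OF Ssv yh Z g])
    have c1: "mrs Mm1 Y Z g (fam Y h) \<in> carrier (mdl Mm1 Z)" using ms_closed[OF MS Y Z g] fp[OF yh] by blast
    have c2: "fam Z (cmp C h g) \<in> carrier (mdl Mm1 Z)" using fp[OF zS] by blast
    have "iota Z (mrs Mm1 Y Z g (fam Y h)) = mrs P Y Z g (iota Y (fam Y h))"
      using mm_nat[OF im Y Z g] fp[OF yh] by blast
    also have "\<dots> = mrs P Y Z g (mrs P X Y h s)" using fp[OF yh] by simp
    also have "\<dots> = mrs P X Z (cmp C h g) s" using ms_comp[OF PS X Y Z h g s] by simp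
    also have "\<dots> = iota Z (fam Z (cmp C h g))" using fp[OF zS] by simp
    finally show "mrs Mm1 Y Z g (fam Y h) = fam Z (cmp C h g)"
      using inj[OF Z] c1 c2 unfolding inj_on_def by blast
  qed
  have "\<exists>t. t \<in> carrier (mdl Mm1 X) \<and> (\<forall>(Y, h)\<in>S. mrs Mm1 X Y h t = fam Y h)"
    using sheaf_glue[OF ms_sheaf[OF MS] X SC mf] by (rule ex1_implies_ex)
  then obtain t where t: "t \<in> carrier (mdl Mm1 X)" and tS: "\<forall>(Y, h)\<in>S. mrs Mm1 X Y h t = fam Y h"
    by (elim exE conjE)
  have mfP: "matching_family C (\<lambda>X. carrier (mdl P X)) (mrs P) S (\<lambda>Y h. mrs P X Y h s)"
    unfolding matching_family_def
  proof (intro ballI, clarify, intro conjI ballI)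
    fix Y h assume yh: "(Y, h) \<in> S"
    have Y: "Y \<in> Ob C" and h: "h \<in> Hom C Y X" using sieve_sub[OF Ssv yh] by auto
    show "mrs P X Y h s \<in> carrier (mdl P Y)" by (rule ms_closed[OF PS X Y h s])
    fix Z g assume Z: "Z \<in> Ob C" and g: "g \<in> Hom C Z Y"
    show "mrs P Y Z g (mrs P X Y h s) = mrs P X Z (cmp C h g) s" using ms_comp[OF PS X Y Z h g s] by simp
  qed
  have uq: "\<exists>!t. t \<in> carrier (mdl P X) \<and> (\<forall>(Y, h)\<in>S. mrs P X Y h t = mrs P X Y h s)"
    by (rule sheaf_glue[OF ms_sheaf[OF PS] X SC mfP])
  have it: "iota X t \<in> carrier (mdl P X)" using lin_closed[OF mm_linear[OF im X] t] .
  have "\<forall>(Y, h)\<in>S. mrs P X Y h (iota X t) = mrs P X Y h s"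
  proof (clarify)
    fix Y h assume yh: "(Y, h) \<in> S"
    have Y: "Y \<in> Ob C" and h: "h \<in> Hom C Y X" using sieve_sub[OF Ssv yh] by auto
    have "mrs P X Y h (iota X t) = iota Y (mrs Mm1 X Y h t)" using mm_nat[OF im X Y h t] by simp
    also have "\<dots> = iota Y (fam Y h)" using bspec[OF tS yh] by simp
    also have "\<dots> = mrs P X Y h s" using fp[OF yh] by simp
    finally show "mrs P X Y h (iota X t) = mrs P X Y h s" .
  qed
  then have q1: "iota X t \<in> carrier (mdl P X) \<and> (\<forall>(Y, h)\<in>S. mrs P X Y h (iota X t) = mrs P X Y h s)" using it by blast
  have q2: "s \<in> carrier (mdl P X) \<and> (\<forall>(Y, h)\<in>S. mrs P X Y h s = mrs P X Y h s)" using s by auto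
  have "iota X t = s" by (rule ex1_uniq[OF uq q1 q2])
  then show ?thesis using t by blast
qed




lemma finsum_split_add:
  fixes m1 m0 :: nat
  assumes "abelian_monoid M" "g \<in> {..<m1+m0} \<rightarrow> carrier M"
  shows "finsum M g {..<m1+m0} = finsum M g {..<m1} \<oplus>\<^bsub>M\<^esub> finsum M (\<lambda>i. g (m1 + i)) {..<m0}"
proof -
  interpret abelian_monoid M by fact
  have eq: "{..<m1+m0} = {..<m1} \<union> (\<lambda>i. m1 + i) ` {..<m0}"
  proof
    show "{..<m1+m0} \<subseteq> {..<m1} \<union> (\<lambda>i. m1 + i) ` {..<m0}"
    proof
      fix k assume k: "k \<in> {..<m1+m0}"
      show "k \<in> {..<m1} \<union> (\<lambda>i. m1 + i) ` {..<m0}"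
      proof (cases "k < m1")
        case False then have "k = m1 + (k - m1)" "k - m1 < m0" using k by auto
        then show ?thesis by blast
      qed simp
    qed
  qed auto
  have g1: "g \<in> {..<m1} \<rightarrow> carrier M" and g2: "g \<in> (\<lambda>i. m1 + i) ` {..<m0} \<rightarrow> carrier M"
    using assms(2) by auto
  have "finsum M g {..<m1+m0} = finsum M g {..<m1} \<oplus>\<^bsub>M\<^esub> finsum M g ((\<lambda>i. m1 + i) ` {..<m0})"
    unfolding eq by (rule finsum_Un_disjoint) (use g1 g2 in auto)
  also have "finsum M g ((\<lambda>i. m1 + i) ` {..<m0}) = finsum M (\<lambda>i. g (m1 + i)) {..<m0}"
    by (rule finsum_reindex[OF g2]) simp
  finally show ?thesis .
qed

lemma free_lemma:
  assumes site: "is_site C" and RS: "ring_sheaf C R" and PS: "module_sheaf C R P" and NS: "module_sheaf C R N0"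
    and MS: "module_sheaf C R Mm1" and se: "short_exact C R Mm1 P N0 iota pi" and W: "W \<in> Ob C"
    and B1: "basis_on C R Mm1 m1 W b" and B0: "basis_on C R N0 m0 W e"
    and l: "\<And>i. i < m0 \<Longrightarrow> l i \<in> carrier (mdl P W)" and pil: "\<And>i. i < m0 \<Longrightarrow> pi W (l i) = e i"
  shows "basis_on C R P (m1 + m0) W (\<lambda>k. if k < m1 then iota W (b k) else l (k - m1))"
  unfolding basis_on_def
proof (intro conjI allI impI ballI)
  note im = se_1[OF se] and pm = se_2[OF se]
  define E where "E = (\<lambda>k. if k < m1 then iota W (b k) else l (k - m1))"
  fix k assume k: "k < m1 + m0"
  show "(if k < m1 then iota W (b k) else l (k - m1)) \<in> carrier (mdl P W)"
    using lin_closed[OF mm_linear[OF im W] basis_el[OF B1]] l k by auto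
next
  note im = se_1[OF se] and pm = se_2[OF se]
  fix X u s assume X: "X \<in> Ob C" and u: "u \<in> Hom C X W" and s: "s \<in> carrier (mdl P X)"
  interpret PX: module "rng R X" "mdl P X" by (rule ms_module[OF PS X])
  interpret NX: module "rng R X" "mdl N0 X" by (rule ms_module[OF NS X])
  interpret MX: module "rng R X" "mdl Mm1 X" by (rule ms_module[OF MS X])
  have PM: "module (rng R X) (mdl P X)" and NM: "module (rng R X) (mdl N0 X)" and MM: "module (rng R X) (mdl Mm1 X)"
    by (rule ms_module[OF PS X], rule ms_module[OF NS X], rule ms_module[OF MS X])
  note iL = mm_linear[OF im X] and pL = mm_linear[OF pm X]
  define Bm where "Bm = (\<lambda>k. mrs Mm1 W X u (b k))"
  define Be where "Be = (\<lambda>i. mrs N0 W X u (e i))"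
  define L where "L = (\<lambda>i. mrs P W X u (l i))"
  have Bmc: "Bm \<in> {..<m1} \<rightarrow> carrier (mdl Mm1 X)" unfolding Bm_def using ms_closed[OF MS W X u] basis_el[OF B1] by auto
  have Bec: "Be \<in> {..<m0} \<rightarrow> carrier (mdl N0 X)" unfolding Be_def using ms_closed[OF NS W X u] basis_el[OF B0] by auto
  have Lc: "L \<in> {..<m0} \<rightarrow> carrier (mdl P X)" unfolding L_def using ms_closed[OF PS W X u] l by auto
  have iBmc: "(\<lambda>k. iota X (Bm k)) \<in> {..<m1} \<rightarrow> carrier (mdl P X)" using Bmc lin_closed[OF iL] by auto
  have piL: "pi X (L i) = Be i" if "i < m0" for i
    unfolding L_def Be_def using mm_nat[OF pm W X u l[OF that]] pil[OF that] by simp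
  have piiota: "pi X (iota X a) = \<zero>\<^bsub>mdl N0 X\<^esub>" if "a \<in> carrier (mdl Mm1 X)" for a
    using se_4[OF se] X that by blast
  define EE where "EE = (\<lambda>k. mrs P W X u (if k < m1 then iota W (b k) else l (k - m1)))"
  have EE1: "EE k = iota X (Bm k)" if "k < m1" for k
    unfolding EE_def Bm_def using that mm_nat[OF im W X u basis_el[OF B1 that]] by simp
  have EE2: "EE (m1 + i) = L i" if "i < m0" for i
    unfolding EE_def L_def using that by simp
  have EEc: "EE \<in> {..<m1+m0} \<rightarrow> carrier (mdl P X)"
  proof
    fix k assume "k \<in> {..<m1+m0}"
    then show "EE k \<in> carrier (mdl P X)"
      using EE1[of k] EE2[of "k - m1"] iBmc Lc by (cases "k < m1") auto
  qed
  have rep: "(\<Oplus>\<^bsub>mdl P X\<^esub>k\<in>{..<m1+m0}. cc k \<odot>\<^bsub>mdl P X\<^esub> EE k)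
      = iota X (\<Oplus>\<^bsub>mdl Mm1 X\<^esub>k\<in>{..<m1}. cc k \<odot>\<^bsub>mdl Mm1 X\<^esub> Bm k) \<oplus>\<^bsub>mdl P X\<^esub>
        (\<Oplus>\<^bsub>mdl P X\<^esub>i\<in>{..<m0}. cc (m1 + i) \<odot>\<^bsub>mdl P X\<^esub> L i)"
    if cc: "cc \<in> {..<m1+m0} \<rightarrow> carrier (rng R X)" for cc
  proof -
    have cc1: "cc \<in> {..<m1} \<rightarrow> carrier (rng R X)" and cc2: "(\<lambda>i. cc (m1 + i)) \<in> {..<m0} \<rightarrow> carrier (rng R X)"
      using cc by auto
    have "(\<Oplus>\<^bsub>mdl P X\<^esub>k\<in>{..<m1+m0}. cc k \<odot>\<^bsub>mdl P X\<^esub> EE k)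
       = (\<Oplus>\<^bsub>mdl P X\<^esub>k\<in>{..<m1}. cc k \<odot>\<^bsub>mdl P X\<^esub> EE k) \<oplus>\<^bsub>mdl P X\<^esub>
         (\<Oplus>\<^bsub>mdl P X\<^esub>i\<in>{..<m0}. cc (m1 + i) \<odot>\<^bsub>mdl P X\<^esub> EE (m1 + i))"
      by (rule finsum_split_add[OF PX.abelian_monoid_axioms]) (use cc EEc in \<open>auto simp: Pi_iff\<close>)
    also have "(\<Oplus>\<^bsub>mdl P X\<^esub>k\<in>{..<m1}. cc k \<odot>\<^bsub>mdl P X\<^esub> EE k) = (\<Oplus>\<^bsub>mdl P X\<^esub>k\<in>{..<m1}. cc k \<odot>\<^bsub>mdl P X\<^esub> iota X (Bm k))"
      by (rule lc_cong[OF PM cc1 iBmc]) (auto simp: EE1)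
    also have "\<dots> = iota X (\<Oplus>\<^bsub>mdl Mm1 X\<^esub>k\<in>{..<m1}. cc k \<odot>\<^bsub>mdl Mm1 X\<^esub> Bm k)"
      by (rule lc_linear[OF MM PM iL _ cc1 Bmc, symmetric]) simp
    also have "(\<Oplus>\<^bsub>mdl P X\<^esub>i\<in>{..<m0}. cc (m1 + i) \<odot>\<^bsub>mdl P X\<^esub> EE (m1 + i)) = (\<Oplus>\<^bsub>mdl P X\<^esub>i\<in>{..<m0}. cc (m1 + i) \<odot>\<^bsub>mdl P X\<^esub> L i)"
      by (rule lc_cong[OF PM cc2 Lc]) (auto simp: EE2)
    finally show ?thesis .
  qed
  have pirep: "pi X (\<Oplus>\<^bsub>mdl P X\<^esub>k\<in>{..<m1+m0}. cc k \<odot>\<^bsub>mdl P X\<^esub> EE k)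
      = (\<Oplus>\<^bsub>mdl N0 X\<^esub>i\<in>{..<m0}. cc (m1 + i) \<odot>\<^bsub>mdl N0 X\<^esub> Be i)"
    if cc: "cc \<in> {..<m1+m0} \<rightarrow> carrier (rng R X)" for cc
  proof -
    have cc1: "cc \<in> {..<m1} \<rightarrow> carrier (rng R X)" and cc2: "(\<lambda>i. cc (m1 + i)) \<in> {..<m0} \<rightarrow> carrier (rng R X)"
      using cc by auto
    have A: "(\<Oplus>\<^bsub>mdl Mm1 X\<^esub>k\<in>{..<m1}. cc k \<odot>\<^bsub>mdl Mm1 X\<^esub> Bm k) \<in> carrier (mdl Mm1 X)"
      by (rule lc_closed[OF MM _ cc1 Bmc]) simp
    have S0: "(\<Oplus>\<^bsub>mdl P X\<^esub>i\<in>{..<m0}. cc (m1 + i) \<odot>\<^bsub>mdl P X\<^esub> L i) \<in> carrier (mdl P X)"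
      by (rule lc_closed[OF PM _ cc2 Lc]) simp
    have "pi X (\<Oplus>\<^bsub>mdl P X\<^esub>k\<in>{..<m1+m0}. cc k \<odot>\<^bsub>mdl P X\<^esub> EE k)
        = pi X (iota X (\<Oplus>\<^bsub>mdl Mm1 X\<^esub>k\<in>{..<m1}. cc k \<odot>\<^bsub>mdl Mm1 X\<^esub> Bm k)) \<oplus>\<^bsub>mdl N0 X\<^esub>
          pi X (\<Oplus>\<^bsub>mdl P X\<^esub>i\<in>{..<m0}. cc (m1 + i) \<odot>\<^bsub>mdl P X\<^esub> L i)"
      unfolding rep[OF cc] by (rule lin_add[OF pL lin_closed[OF iL A] S0])
    also have "\<dots> = pi X (\<Oplus>\<^bsub>mdl P X\<^esub>i\<in>{..<m0}. cc (m1 + i) \<odot>\<^bsub>mdl P X\<^esub> L i)"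
      using piiota[OF A] lin_closed[OF pL S0] by simp
    also have "\<dots> = (\<Oplus>\<^bsub>mdl N0 X\<^esub>i\<in>{..<m0}. cc (m1 + i) \<odot>\<^bsub>mdl N0 X\<^esub> pi X (L i))"
      by (rule lc_linear[OF PM NM pL _ cc2 Lc]) simp
    also have "\<dots> = (\<Oplus>\<^bsub>mdl N0 X\<^esub>i\<in>{..<m0}. cc (m1 + i) \<odot>\<^bsub>mdl N0 X\<^esub> Be i)"
      by (rule lc_cong[OF NM cc2 Bec]) (auto simp: piL)
    finally show ?thesis .
  qed
  have cfN: "coef C R N0 m0 W e X u t \<in> {..<m0} \<rightarrow>\<^sub>E carrier (rng R X)"
     "t = (\<Oplus>\<^bsub>mdl N0 X\<^esub>i\<in>{..<m0}. coef C R N0 m0 W e X u t i \<odot>\<^bsub>mdl N0 X\<^esub> Be i)"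
    if "t \<in> carrier (mdl N0 X)" for t
    using coef_prop[OF B0 X u that] unfolding Be_def by auto
  have cfNu: "coef C R N0 m0 W e X u t = c"
    if "t \<in> carrier (mdl N0 X)" "c \<in> {..<m0} \<rightarrow>\<^sub>E carrier (rng R X)" "t = (\<Oplus>\<^bsub>mdl N0 X\<^esub>i\<in>{..<m0}. c i \<odot>\<^bsub>mdl N0 X\<^esub> Be i)" for t c
    using coef_unique[OF B0 X u that(1,2)] that(3) unfolding Be_def by auto
  have cfM: "coef C R Mm1 m1 W b X u a \<in> {..<m1} \<rightarrow>\<^sub>E carrier (rng R X)"
     "a = (\<Oplus>\<^bsub>mdl Mm1 X\<^esub>i\<in>{..<m1}. coef C R Mm1 m1 W b X u a i \<odot>\<^bsub>mdl Mm1 X\<^esub> Bm i)"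
    if "a \<in> carrier (mdl Mm1 X)" for a
    using coef_prop[OF B1 X u that] unfolding Bm_def by auto
  have cfMu: "coef C R Mm1 m1 W b X u a = c"
    if "a \<in> carrier (mdl Mm1 X)" "c \<in> {..<m1} \<rightarrow>\<^sub>E carrier (rng R X)" "a = (\<Oplus>\<^bsub>mdl Mm1 X\<^esub>i\<in>{..<m1}. c i \<odot>\<^bsub>mdl Mm1 X\<^esub> Bm i)" for a c
    using coef_unique[OF B1 X u that(1,2)] that(3) unfolding Bm_def by auto
  define t where "t = pi X s"
  have t: "t \<in> carrier (mdl N0 X)" unfolding t_def by (rule lin_closed[OF pL s])
  define d where "d = coef C R N0 m0 W e X u t"
  have dE: "d \<in> {..<m0} \<rightarrow>\<^sub>E carrier (rng R X)" and dP: "d \<in> {..<m0} \<rightarrow> carrier (rng R X)"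
    using cfN(1)[OF t] unfolding d_def by (auto simp: PiE_iff)
  define s0 where "s0 = (\<Oplus>\<^bsub>mdl P X\<^esub>i\<in>{..<m0}. d i \<odot>\<^bsub>mdl P X\<^esub> L i)"
  have s0: "s0 \<in> carrier (mdl P X)" unfolding s0_def by (rule lc_closed[OF PM _ dP Lc]) simp
  have ps0: "pi X s0 = t"
  proof -
    have "pi X s0 = (\<Oplus>\<^bsub>mdl N0 X\<^esub>i\<in>{..<m0}. d i \<odot>\<^bsub>mdl N0 X\<^esub> pi X (L i))"
      unfolding s0_def by (rule lc_linear[OF PM NM pL _ dP Lc]) simp
    also have "\<dots> = (\<Oplus>\<^bsub>mdl N0 X\<^esub>i\<in>{..<m0}. d i \<odot>\<^bsub>mdl N0 X\<^esub> Be i)"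
      by (rule lc_cong[OF NM dP Bec]) (auto simp: piL)
    also have "\<dots> = t" using cfN(2)[OF t] unfolding d_def by simp
    finally show ?thesis .
  qed
  define s' where "s' = s \<ominus>\<^bsub>mdl P X\<^esub> s0"
  have s': "s' \<in> carrier (mdl P X)" unfolding s'_def using s s0 by simp
  have ps': "pi X s' = \<zero>\<^bsub>mdl N0 X\<^esub>"
  proof -
    have "pi X s' = pi X s \<ominus>\<^bsub>mdl N0 X\<^esub> pi X s0" unfolding s'_def
      by (rule add_hom_minus[OF PX.abelian_group_axioms NX.abelian_group_axioms])
         (use lin_closed[OF pL] lin_add[OF pL] s s0 in auto)
    then show ?thesis using ps0 t unfolding t_def by (simp add: NX.r_neg NX.minus_eq)
  qed
  obtain a where a: "a \<in> carrier (mdl Mm1 X)" and ia: "iota X a = s'"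
    using glue_kernel[OF site PS MS se X s' ps'] by blast
  define c where "c = coef C R Mm1 m1 W b X u a"
  have cE: "c \<in> {..<m1} \<rightarrow>\<^sub>E carrier (rng R X)" and cP: "c \<in> {..<m1} \<rightarrow> carrier (rng R X)"
    using cfM(1)[OF a] unfolding c_def by (auto simp: PiE_iff)
  define cc where "cc = (\<lambda>k\<in>{..<m1+m0}. if k < m1 then c k else d (k - m1))"
  have ccE: "cc \<in> {..<m1+m0} \<rightarrow>\<^sub>E carrier (rng R X)"
    unfolding cc_def using cP dP by (auto simp: Pi_iff)
  have ccP: "cc \<in> {..<m1+m0} \<rightarrow> carrier (rng R X)" using ccE by (auto simp: PiE_iff)
  have srep: "s = (\<Oplus>\<^bsub>mdl P X\<^esub>k\<in>{..<m1+m0}. cc k \<odot>\<^bsub>mdl P X\<^esub> EE k)"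
  proof -
    have e1: "(\<Oplus>\<^bsub>mdl Mm1 X\<^esub>k\<in>{..<m1}. cc k \<odot>\<^bsub>mdl Mm1 X\<^esub> Bm k) = a"
    proof -
      have "(\<Oplus>\<^bsub>mdl Mm1 X\<^esub>k\<in>{..<m1}. cc k \<odot>\<^bsub>mdl Mm1 X\<^esub> Bm k) = (\<Oplus>\<^bsub>mdl Mm1 X\<^esub>k\<in>{..<m1}. c k \<odot>\<^bsub>mdl Mm1 X\<^esub> Bm k)"
        by (rule lc_cong[OF MM cP Bmc]) (auto simp: cc_def)
      also have "\<dots> = a" using cfM(2)[OF a] unfolding c_def by simp
      finally show ?thesis .
    qed
    have e2: "(\<Oplus>\<^bsub>mdl P X\<^esub>i\<in>{..<m0}. cc (m1 + i) \<odot>\<^bsub>mdl P X\<^esub> L i) = s0"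
      unfolding s0_def by (rule lc_cong[OF PM dP Lc]) (auto simp: cc_def)
    have "(\<Oplus>\<^bsub>mdl P X\<^esub>k\<in>{..<m1+m0}. cc k \<odot>\<^bsub>mdl P X\<^esub> EE k) = s' \<oplus>\<^bsub>mdl P X\<^esub> s0"
      unfolding rep[OF ccP] e1 e2 ia ..
    also have "\<dots> = s" unfolding s'_def using s s0 by (simp add: PX.minus_eq PX.a_assoc PX.l_neg)
    finally show ?thesis by simp
  qed
  have uniq: "c1 = cc" if c1E: "c1 \<in> {..<m1+m0} \<rightarrow>\<^sub>E carrier (rng R X)"
    and c1s: "s = (\<Oplus>\<^bsub>mdl P X\<^esub>k\<in>{..<m1+m0}. c1 k \<odot>\<^bsub>mdl P X\<^esub> EE k)" for c1
  proof -
    have c1P: "c1 \<in> {..<m1+m0} \<rightarrow> carrier (rng R X)" using c1E by (auto simp: PiE_iff)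
    have gen: "\<forall>i<m0. c1 (m1 + i) = d i"
    proof -
      define d1 where "d1 = (\<lambda>i\<in>{..<m0}. c1 (m1 + i))"
      have d1E: "d1 \<in> {..<m0} \<rightarrow>\<^sub>E carrier (rng R X)" unfolding d1_def using c1P by (auto simp: Pi_iff)
      have d1P: "d1 \<in> {..<m0} \<rightarrow> carrier (rng R X)" using d1E by (auto simp: PiE_iff)
      have "t = (\<Oplus>\<^bsub>mdl N0 X\<^esub>i\<in>{..<m0}. c1 (m1 + i) \<odot>\<^bsub>mdl N0 X\<^esub> Be i)"
        unfolding t_def using pirep[OF c1P] c1s by simp
      also have "\<dots> = (\<Oplus>\<^bsub>mdl N0 X\<^esub>i\<in>{..<m0}. d1 i \<odot>\<^bsub>mdl N0 X\<^esub> Be i)"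
        by (rule lc_cong[OF NM d1P Bec]) (auto simp: d1_def)
      finally have "d = d1" unfolding d_def by (rule cfNu[OF t d1E])
      then show ?thesis unfolding d1_def by simp
    qed
    have c1P1: "c1 \<in> {..<m1} \<rightarrow> carrier (rng R X)" and c1P2: "(\<lambda>i. c1 (m1 + i)) \<in> {..<m0} \<rightarrow> carrier (rng R X)"
      using c1P by auto
    define A1 where "A1 = (\<Oplus>\<^bsub>mdl Mm1 X\<^esub>k\<in>{..<m1}. c1 k \<odot>\<^bsub>mdl Mm1 X\<^esub> Bm k)"
    have A1: "A1 \<in> carrier (mdl Mm1 X)" unfolding A1_def by (rule lc_closed[OF MM _ c1P1 Bmc]) simp
    have S1: "(\<Oplus>\<^bsub>mdl P X\<^esub>i\<in>{..<m0}. c1 (m1 + i) \<odot>\<^bsub>mdl P X\<^esub> L i) = s0"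
      unfolding s0_def by (rule lc_cong[OF PM dP Lc]) (use gen in auto)
    have "iota X A1 \<oplus>\<^bsub>mdl P X\<^esub> s0 = s" unfolding A1_def using rep[OF c1P] c1s S1 by simp
    also have "\<dots> = s' \<oplus>\<^bsub>mdl P X\<^esub> s0" unfolding s'_def using s s0 by (simp add: PX.minus_eq PX.a_assoc PX.l_neg)
    finally have "iota X A1 = s'" using lin_closed[OF iL A1] s' s0 by simp
    then have "iota X A1 = iota X a" using ia by simp
    then have "A1 = a" by (rule inj_onD[OF se_3[OF se, THEN bspec, OF X] _ A1 a])
    moreover have "coef C R Mm1 m1 W b X u A1 = restrict c1 {..<m1}"
    proof (rule cfMu[OF A1])
      show "restrict c1 {..<m1} \<in> {..<m1} \<rightarrow>\<^sub>E carrier (rng R X)" using c1P1 by simp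
      have rP: "restrict c1 {..<m1} \<in> {..<m1} \<rightarrow> carrier (rng R X)" using c1P1 by auto
      show "A1 = (\<Oplus>\<^bsub>mdl Mm1 X\<^esub>i\<in>{..<m1}. restrict c1 {..<m1} i \<odot>\<^bsub>mdl Mm1 X\<^esub> Bm i)"
        unfolding A1_def by (rule lc_cong[OF MM rP Bmc]) auto
    qed
    ultimately have "restrict c1 {..<m1} = c" unfolding c_def by simp
    then have low: "\<forall>k<m1. c1 k = c k" by auto
    show "c1 = cc"
    proof (rule PiE_ext[OF c1E ccE])
      fix k assume k: "k \<in> {..<m1+m0}"
      show "c1 k = cc k"
      proof (cases "k < m1")
        case True then show ?thesis using low k by (simp add: cc_def)
      next
        case False
        then have "k = m1 + (k - m1)" "k - m1 < m0" using k by auto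
        then have "c1 k = d (k - m1)" using gen by metis
        then show ?thesis using False k unfolding cc_def by simp
      qed
    qed
  qed
  have ex1: "\<exists>!c. c \<in> {..<m1 + m0} \<rightarrow>\<^sub>E carrier (rng R X) \<and> s = (\<Oplus>\<^bsub>mdl P X\<^esub>k\<in>{..<m1 + m0}. c k \<odot>\<^bsub>mdl P X\<^esub> EE k)"
    by (rule ex1I[of _ cc]) (use ccE srep uniq in blast)+
  then show "\<exists>!c. c \<in> {..<m1 + m0} \<rightarrow>\<^sub>E carrier (rng R X) \<and>
        s = (\<Oplus>\<^bsub>mdl P X\<^esub>k\<in>{..<m1 + m0}. c k \<odot>\<^bsub>mdl P X\<^esub> mrs P W X u (if k < m1 then iota W (b k) else l (k - m1)))"
    unfolding EE_def .
qed


lemma gc_sub: "gen_cover C U \<Longrightarrow> U \<subseteq> Ob C" unfolding gen_cover_def by (elim conjE)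
lemma gc_loc: assumes "gen_cover C U" "X \<in> Ob C" shows "locally C X (\<lambda>Y f. \<exists>V\<in>U. Hom C Y V \<noteq> {})"
proof -
  have "\<forall>X\<in>Ob C. locally C X (\<lambda>Y f. \<exists>V\<in>U. Hom C Y V \<noteq> {})" using assms(1) unfolding gen_cover_def by (elim conjE)
  then show ?thesis using assms(2) by (rule bspec)
qed

lemma bf_P: "butterfly C R Nm1 N0 dN Mm1 M0 dM P kap iota pi jay \<Longrightarrow> module_sheaf C R P"
  unfolding butterfly_def by (elim conjE)
lemma bf_se: "butterfly C R Nm1 N0 dN Mm1 M0 dM P kap iota pi jay \<Longrightarrow> short_exact C R Mm1 P N0 iota pi"
  unfolding butterfly_def by (elim conjE)

theorem proposition8p6p3:
  fixes C :: "('o, 'a) site" and R :: "('o, 'a, 'r) ringsheaf"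
    and Nm1 :: "('o, 'a, 'r, 'n1) modsheaf" and N0 :: "('o, 'a, 'r, 'n0) modsheaf"
    and Mm1 :: "('o, 'a, 'r, 'm1) modsheaf" and M0 :: "('o, 'a, 'r, 'm0) modsheaf"
    and P :: "('o, 'a, 'r, 'p) modsheaf"
    and dN :: "'o \<Rightarrow> 'n1 \<Rightarrow> 'n0" and dM :: "'o \<Rightarrow> 'm1 \<Rightarrow> 'm0"
    and kap :: "'o \<Rightarrow> 'n1 \<Rightarrow> 'p" and iota :: "'o \<Rightarrow> 'm1 \<Rightarrow> 'p"
    and pi :: "'o \<Rightarrow> 'p \<Rightarrow> 'n0" and jay :: "'o \<Rightarrow> 'p \<Rightarrow> 'm0"
  assumes "is_site C" and "subcanonical C" and "ring_sheaf C R"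
    and "module_sheaf C R Nm1" and "module_sheaf C R N0" and "module_morphism C R Nm1 N0 dN"
    and "module_sheaf C R Mm1" and "module_sheaf C R M0" and "module_morphism C R Mm1 M0 dM"
    and "locally_free C R Nm1" and "locally_free C R N0"
    and "locally_free C R Mm1" and "locally_free C R M0"
    and "butterfly C R Nm1 N0 dN Mm1 M0 dM P kap iota pi jay"
  shows "locally_split_butterfly C R P N0 pi \<and> locally_free C R P"
proof -
  note site = assms(1) and RS = assms(3) and NS = assms(5) and MS = assms(7)
  have PS: "module_sheaf C R P" by (rule bf_P[OF assms(14)])
  have se: "short_exact C R Mm1 P N0 iota pi" by (rule bf_se[OF assms(14)])
  note pm = se_2[OF se]
  obtain m0 U0 where GU0: "gen_cover C U0" and FU0: "\<forall>U\<in>U0. free_on C R N0 m0 U"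
    using assms(11) unfolding locally_free_def locally_free_rank_def by blast
  obtain m1 U1 where GU1: "gen_cover C U1" and FU1: "\<forall>U\<in>U1. free_on C R Mm1 m1 U"
    using assms(12) unfolding locally_free_def locally_free_rank_def by blast
  define good0 where "good0 = (\<lambda>Y. Y \<in> Ob C \<and> (\<exists>e l. basis_on C R N0 m0 Y e \<and>
      (\<forall>i<m0. l i \<in> carrier (mdl P Y) \<and> pi Y (l i) = e i)))"
  define V where "V = {Y. good0 Y}"
  define eU where "eU = (\<lambda>U. SOME e. basis_on C R N0 m0 U e)"
  have eU: "basis_on C R N0 m0 U (eU U)" if "U \<in> U0" for U
    using FU0 that unfolding free_on_iff eU_def by (metis someI_ex)
  have U0Ob: "U0 \<subseteq> Ob C" by (rule gc_sub[OF GU0])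
  have GV: "gen_cover C V"
  proof (rule gen_cover_refine[OF site GU0, where Q = "\<lambda>U Y f. \<forall>i<m0. mrs N0 U Y f (eU U i) \<in> pi Y ` carrier (mdl P Y)"])
    fix U assume U: "U \<in> U0"
    have UO: "U \<in> Ob C" using U U0Ob by blast
    show "locally C U (\<lambda>Y f. \<forall>i<m0. mrs N0 U Y f (eU U i) \<in> pi Y ` carrier (mdl P Y))"
    proof (rule locally_all[OF site UO])
      fix i assume i: "i < m0"
      have "eU U i \<in> carrier (mdl N0 U)" by (rule basis_el[OF eU[OF U] i])
      from se_6[OF se, THEN bspec, OF UO, THEN bspec, OF this]
      show "locally C U (\<lambda>Y f. mrs N0 U Y f (eU U i) \<in> pi Y ` carrier (mdl P Y))" .
    qed
  next
    fix U Y f assume U: "U \<in> U0" and Y: "Y \<in> Ob C" and f: "f \<in> Hom C Y U"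
      and Q: "\<forall>i<m0. mrs N0 U Y f (eU U i) \<in> pi Y ` carrier (mdl P Y)"
    have UO: "U \<in> Ob C" using U U0Ob by blast
    have B: "basis_on C R N0 m0 Y (\<lambda>i. mrs N0 U Y f (eU U i))" by (rule basis_pull[OF site NS UO Y f eU[OF U]])
    define l where "l = (\<lambda>i. SOME p. p \<in> carrier (mdl P Y) \<and> pi Y p = mrs N0 U Y f (eU U i))"
    have lp: "\<forall>i<m0. l i \<in> carrier (mdl P Y) \<and> pi Y (l i) = mrs N0 U Y f (eU U i)"
    proof (intro allI impI)
      fix i assume "i < m0"
      then have "mrs N0 U Y f (eU U i) \<in> pi Y ` carrier (mdl P Y)" using Q by simp
      then obtain p where "p \<in> carrier (mdl P Y)" "pi Y p = mrs N0 U Y f (eU U i)" by (elim imageE) simp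
      then have "p \<in> carrier (mdl P Y) \<and> pi Y p = mrs N0 U Y f (eU U i)" by simp
      then show "l i \<in> carrier (mdl P Y) \<and> pi Y (l i) = mrs N0 U Y f (eU U i)" unfolding l_def by (rule someI)
    qed
    have "\<exists>e l. basis_on C R N0 m0 Y e \<and> (\<forall>i<m0. l i \<in> carrier (mdl P Y) \<and> pi Y (l i) = e i)"
      by (rule exI[of _ "\<lambda>i. mrs N0 U Y f (eU U i)"], rule exI[of _ l]) (use B lp in simp)
    then show "Y \<in> V" unfolding V_def good0_def using Y by simp
  next
    show "V \<subseteq> Ob C" unfolding V_def good0_def by auto
  qed
  have split: "splits_on C R P N0 pi Y" if YV: "Y \<in> V" for Y
  proof -
    obtain e l where Y: "Y \<in> Ob C" and B: "basis_on C R N0 m0 Y e" and l: "\<forall>i<m0. l i \<in> carrier (mdl P Y) \<and> pi Y (l i) = e i"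
      using YV unfolding V_def good0_def by blast
    show ?thesis by (rule split_lemma[OF site RS PS NS pm Y B]) (use l in auto)
  qed
  have U1Ob: "U1 \<subseteq> Ob C" by (rule gc_sub[OF GU1])
  define W where "W = {Y. good0 Y \<and> free_on C R Mm1 m1 Y}"
  have GW: "gen_cover C W"
  proof (rule gen_cover_refine[OF site GV, where Q = "\<lambda>V Y f. \<exists>U\<in>U1. Hom C Y U \<noteq> {}"])
    fix V' assume "V' \<in> V"
    then have "V' \<in> Ob C" unfolding V_def good0_def by blast
    then show "locally C V' (\<lambda>Y f. \<exists>U\<in>U1. Hom C Y U \<noteq> {})" by (rule gc_loc[OF GU1])
  next
    fix V' Y f assume V': "V' \<in> V" and Y: "Y \<in> Ob C" and f: "f \<in> Hom C Y V'" and Q: "\<exists>U\<in>U1. Hom C Y U \<noteq> {}"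
    obtain e l where VO: "V' \<in> Ob C" and B: "basis_on C R N0 m0 V' e" and l: "\<forall>i<m0. l i \<in> carrier (mdl P V') \<and> pi V' (l i) = e i"
      using V' unfolding V_def good0_def by blast
    have B': "basis_on C R N0 m0 Y (\<lambda>i. mrs N0 V' Y f (e i))" by (rule basis_pull[OF site NS VO Y f B])
    have l': "\<forall>i<m0. mrs P V' Y f (l i) \<in> carrier (mdl P Y) \<and> pi Y (mrs P V' Y f (l i)) = mrs N0 V' Y f (e i)"
      using l ms_closed[OF PS VO Y f] mm_nat[OF pm VO Y f] by auto
    have "\<exists>e l. basis_on C R N0 m0 Y e \<and> (\<forall>i<m0. l i \<in> carrier (mdl P Y) \<and> pi Y (l i) = e i)"
      by (rule exI[of _ "\<lambda>i. mrs N0 V' Y f (e i)"], rule exI[of _ "\<lambda>i. mrs P V' Y f (l i)"]) (use B' l' in simp)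
    then have g0: "good0 Y" unfolding good0_def using Y by simp
    obtain U g where U: "U \<in> U1" and g: "g \<in> Hom C Y U" using Q by blast
    have UO: "U \<in> Ob C" using U U1Ob by blast
    obtain b where "basis_on C R Mm1 m1 U b" using FU1 U unfolding free_on_iff by blast
    then have "basis_on C R Mm1 m1 Y (\<lambda>i. mrs Mm1 U Y g (b i))" by (rule basis_pull[OF site MS UO Y g])
    then have "free_on C R Mm1 m1 Y" unfolding free_on_iff by blast
    then show "Y \<in> W" unfolding W_def using g0 by blast
  next
    show "W \<subseteq> Ob C" unfolding W_def good0_def by auto
  qed
  have free: "free_on C R P (m1 + m0) Y" if YW: "Y \<in> W" for Y
  proof -
    obtain e l where Y: "Y \<in> Ob C" and B: "basis_on C R N0 m0 Y e" and l: "\<forall>i<m0. l i \<in> carrier (mdl P Y) \<and> pi Y (l i) = e i"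
      and F1: "free_on C R Mm1 m1 Y"
      using YW unfolding W_def good0_def by blast
    obtain b where B1: "basis_on C R Mm1 m1 Y b" using F1 unfolding free_on_iff by blast
    have "basis_on C R P (m1 + m0) Y (\<lambda>k. if k < m1 then iota Y (b k) else l (k - m1))"
      by (rule free_lemma[OF site RS PS NS MS se Y B1 B]) (use l in auto)
    then show ?thesis unfolding free_on_iff by blast
  qed
  have "locally_split_butterfly C R P N0 pi" unfolding locally_split_butterfly_def
    using GV split by blast
  moreover have "locally_free_rank C R P (m1 + m0)" unfolding locally_free_rank_def
    using GW free by blast
  ultimately show ?thesis unfolding locally_free_def by blast
qed


end
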